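(* Fix a set partition $\mathcal B=\{B_1,\dots,B_k\}$ of $[n]$ with $\min B_1<\cdots<\min B_k$, and let $X=\{(i,j): i<j,\ B_i,B_j \text{ nested}\}$. For each $A\subseteq X$ let $W_A$ be the set of packed words $w$ with $\mathrm{setpar}(w)=\mathcal B$, $A\subseteq\mathrm{Inv}(w)$ and $(X\setminus A)\cap\mathrm{Inv}(w)=\emptyset$. Then each nonempty $W_A$ is a connected component of the planar weak order on packed words of length $n$, and every connected component arises this way. Each connected component $W$ is a bounded lattice, order-isomorphic via $\mathrm{delrpt}$ to an interval of the weak order on $S_k$; in particular for $u,w\in W$, $$u\vee w=\mathrm{pw}(\mathcal B,\mathrm{delrpt}(u)\vee\mathrm{delrpt}(w)),\qquad u\wedge w=\mathrm{pw}(\mathcal B,\mathrm{delrpt}(u)\wedge\mathrm{delrpt}(w)).$$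
   Context: A packed word is a word $w=w_1\cdots w_n$ of positive integers whose set of letters is $\{1,\dots,m\}$ for some $m$; $w^{-1}(a)=\{p:w_p=a\}$. $\mathrm{iInv}(w)=\{(a,b):a<b,\ \min w^{-1}(a)>\max w^{-1}(b)\}$. $T_a(w)$ swaps the letters $a$ and $a+1$ in $w$. The planar weak order on packed words of length $n$ is the reflexive–transitive closure of: $u$ is covered by $w$ iff $u=T_a(w)$ for some $a$ and $|\mathrm{iInv}(w)|=|\mathrm{iInv}(u)|+1$; connected components are those of its Hasse diagram. $\mathrm{setpar}(w)$ is the set partition of $[n]$ into the nonempty fibres $w^{-1}(a)$. If its blocks are $B_1,\dots,B_k$ with $\min B_1<\cdots<\min B_k$ and $b_i=\min B_i$, then $\mathrm{delrpt}(w)$ is the permutation $w_{b_1}w_{b_2}\cdots w_{b_k}\in S_k$ (first occurrences of each letter) and $\mathrm{Inv}(w)=\{(i,j):i<j,\ w_{b_i}>w_{b_j}\}$. Conversely for such $\mathcal B$ and $\sigma\in S_k$, $\mathrm{pw}(\mathcal B,\sigma)$ is the packed word with letter $\sigma(i)$ at every position of $B_i$. Two blocks $B_i,B_j$ are nested if $\min B_i<\min B_j<\max B_i$. The weak order on $S_k$: $\sigma\le\tau$ iff $\mathrm{Inv}(\sigma)\subseteq\mathrm{Inv}(\tau)$, where $\mathrm{Inv}(\sigma)=\{(i,j):i<j,\sigma(i)>\sigma(j)\}$; it is a lattice with join $\vee$ and meet $\wedge$. *)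

theory Defs
  imports Main
begin

text \<open>Words are lists of naturals; positions are 1-based, so position p of w is w ! (p - 1).\<close>

definition packed :: "nat list \<Rightarrow> bool" where
  "packed w \<longleftrightarrow> (\<exists>m. set w = {1..m})"

definition PW :: "nat \<Rightarrow> nat list set" where
  "PW n = {w. packed w \<and> length w = n}"

definition fibre :: "nat list \<Rightarrow> nat \<Rightarrow> nat set" where
  "fibre w a = {p. 1 \<le> p \<and> p \<le> length w \<and> w ! (p - 1) = a}"

definition iInv :: "nat list \<Rightarrow> (nat \<times> nat) set" where
  "iInv w = {(a, b). a \<in> set w \<and> b \<in> set w \<and> a < b \<and>
                     Min (fibre w a) > Max (fibre w b)}"

definition T :: "nat \<Rightarrow> nat list \<Rightarrow> nat list" where
  "T a w = map (\<lambda>x. if x = a then a + 1 else if x = a + 1 then a else x) w"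

definition pcover :: "nat \<Rightarrow> nat list \<Rightarrow> nat list \<Rightarrow> bool" where
  "pcover n u w \<longleftrightarrow> u \<in> PW n \<and> w \<in> PW n \<and>
     (\<exists>a. u = T a w \<and> card (iInv w) = card (iInv u) + 1)"

definition pwo_le :: "nat \<Rightarrow> nat list \<Rightarrow> nat list \<Rightarrow> bool" where
  "pwo_le n u w \<longleftrightarrow> (u = w \<and> u \<in> PW n) \<or> (pcover n)\<^sup>+\<^sup>+ u w"

definition pwo_lt :: "nat \<Rightarrow> nat list \<Rightarrow> nat list \<Rightarrow> bool" where
  "pwo_lt n u w \<longleftrightarrow> pwo_le n u w \<and> u \<noteq> w"

definition hasse :: "nat \<Rightarrow> nat list \<Rightarrow> nat list \<Rightarrow> bool" where
  "hasse n u w \<longleftrightarrow> pwo_lt n u w \<and> \<not> (\<exists>z. pwo_lt n u z \<and> pwo_lt n z w)"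

definition pconn :: "nat \<Rightarrow> nat list \<Rightarrow> nat list \<Rightarrow> bool" where
  "pconn n = (\<lambda>u w. hasse n u w \<or> hasse n w u)\<^sup>*\<^sup>*"

definition is_component :: "nat \<Rightarrow> nat list set \<Rightarrow> bool" where
  "is_component n W \<longleftrightarrow> (\<exists>u \<in> PW n. W = {v \<in> PW n. pconn n u v})"

definition setpar :: "nat list \<Rightarrow> nat set set" where
  "setpar w = {fibre w a | a. a \<in> set w}"

definition ordered_partition :: "nat \<Rightarrow> nat set list \<Rightarrow> bool" where
  "ordered_partition n Bs \<longleftrightarrow>
     (\<forall>B \<in> set Bs. B \<noteq> {}) \<and> \<Union>(set Bs) = {1..n} \<and>
     (\<forall>i j. i < length Bs \<and> j < length Bs \<and> i \<noteq> j \<longrightarrow> Bs ! i \<inter> Bs ! j = {}) \<and>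
     (\<forall>i j. i < j \<and> j < length Bs \<longrightarrow> Min (Bs ! i) < Min (Bs ! j))"

definition firsts :: "nat list \<Rightarrow> nat list" where
  "firsts w = sorted_list_of_set {Min (fibre w a) | a. a \<in> set w}"

definition delrpt :: "nat list \<Rightarrow> nat list" where
  "delrpt w = map (\<lambda>b. w ! (b - 1)) (firsts w)"

text \<open>Permutations in S_k as lists (one-line notation), 1-based values.\<close>
definition perms :: "nat \<Rightarrow> nat list set" where
  "perms k = {\<sigma>. length \<sigma> = k \<and> distinct \<sigma> \<and> set \<sigma> = {1..k}}"

definition perm_Inv :: "nat list \<Rightarrow> (nat \<times> nat) set" where
  "perm_Inv \<sigma> = {(i, j). 1 \<le> i \<and> i < j \<and> j \<le> length \<sigma> \<and> \<sigma> ! (i - 1) > \<sigma> ! (j - 1)}"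

definition Inv :: "nat list \<Rightarrow> (nat \<times> nat) set" where
  "Inv w = perm_Inv (delrpt w)"

definition perm_le :: "nat list \<Rightarrow> nat list \<Rightarrow> bool" where
  "perm_le \<sigma> \<tau> \<longleftrightarrow> perm_Inv \<sigma> \<subseteq> perm_Inv \<tau>"

definition is_lub_on :: "('a \<Rightarrow> 'a \<Rightarrow> bool) \<Rightarrow> 'a set \<Rightarrow> 'a \<Rightarrow> 'a \<Rightarrow> 'a \<Rightarrow> bool" where
  "is_lub_on le S x y z \<longleftrightarrow> z \<in> S \<and> le x z \<and> le y z \<and> (\<forall>z'\<in>S. le x z' \<and> le y z' \<longrightarrow> le z z')"

definition is_glb_on :: "('a \<Rightarrow> 'a \<Rightarrow> bool) \<Rightarrow> 'a set \<Rightarrow> 'a \<Rightarrow> 'a \<Rightarrow> 'a \<Rightarrow> bool" where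
  "is_glb_on le S x y z \<longleftrightarrow> z \<in> S \<and> le z x \<and> le z y \<and> (\<forall>z'\<in>S. le z' x \<and> le z' y \<longrightarrow> le z' z)"

definition perm_join :: "nat list \<Rightarrow> nat list \<Rightarrow> nat list" where
  "perm_join \<sigma> \<tau> = (THE \<rho>. is_lub_on perm_le (perms (length \<sigma>)) \<sigma> \<tau> \<rho>)"

definition perm_meet :: "nat list \<Rightarrow> nat list \<Rightarrow> nat list" where
  "perm_meet \<sigma> \<tau> = (THE \<rho>. is_glb_on perm_le (perms (length \<sigma>)) \<sigma> \<tau> \<rho>)"

text \<open>pw(B, sigma): letter sigma(i) at every position of B_i.\<close>
definition pw :: "nat set list \<Rightarrow> nat list \<Rightarrow> nat list" where
  "pw Bs \<sigma> = map (\<lambda>p. \<sigma> ! (THE i. i < length Bs \<and> p \<in> Bs ! i))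
                  [1..<card (\<Union>(set Bs)) + 1]"

text \<open>Nested pairs X (1-based block indices).\<close>
definition nestedX :: "nat set list \<Rightarrow> (nat \<times> nat) set" where
  "nestedX Bs = {(i, j). 1 \<le> i \<and> i < j \<and> j \<le> length Bs \<and>
       Min (Bs ! (i - 1)) < Min (Bs ! (j - 1)) \<and> Min (Bs ! (j - 1)) < Max (Bs ! (i - 1))}"

definition WA :: "nat \<Rightarrow> nat set list \<Rightarrow> (nat \<times> nat) set \<Rightarrow> nat list set" where
  "WA n Bs A = {w \<in> PW n. setpar w = set Bs \<and> A \<subseteq> Inv w \<and> (nestedX Bs - A) \<inter> Inv w = {}}"

end

theory Submission
  imports Defs
begin


definition Pk :: "nat \<Rightarrow> (nat \<times> nat) set" where
  "Pk k = {(i,j). 1 \<le> i \<and> i < j \<and> j \<le> k}"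

definition cotrans :: "(nat \<times> nat) set \<Rightarrow> bool" where
  "cotrans I \<longleftrightarrow> (\<forall>i j l. (i,l) \<in> I \<and> i < j \<and> j < l \<longrightarrow> (i,j) \<in> I \<or> (j,l) \<in> I)"

definition isinv :: "nat \<Rightarrow> (nat \<times> nat) set \<Rightarrow> bool" where
  "isinv k I \<longleftrightarrow> I \<subseteq> Pk k \<and> trans I \<and> cotrans I"

lemma trans_Pk: "trans (Pk k)"
  unfolding trans_def Pk_def by auto

lemma perms_sv:
  assumes "\<sigma> \<in> perms k" "1 \<le> i" "i \<le> k"
  shows "\<sigma> ! (i - 1) \<in> {1..k}"
proof -
  have "\<sigma> ! (i - 1) \<in> set \<sigma>" using assms unfolding perms_def by auto
  then show ?thesis using assms unfolding perms_def by auto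
qed

lemma perms_sv_inj:
  assumes "\<sigma> \<in> perms k" "1 \<le> i" "i \<le> k" "1 \<le> j" "j \<le> k" "\<sigma> ! (i - 1) = \<sigma> ! (j - 1)"
  shows "i = j"
proof -
  have "i - 1 = j - 1" using assms unfolding perms_def
    by (metis (mono_tags, lifting) Suc_le_eq Suc_pred' less_le_trans mem_Collect_eq nth_eq_iff_index_eq zero_less_one)
  then show ?thesis using assms by simp
qed

lemma perms_sv_surj:
  assumes "\<sigma> \<in> perms k" "v \<in> {1..k}"
  shows "\<exists>i. 1 \<le> i \<and> i \<le> k \<and> \<sigma> ! (i - 1) = v"
proof -
  have "v \<in> set \<sigma>" using assms unfolding perms_def by auto
  then obtain p where "p < length \<sigma>" "\<sigma> ! p = v" by (auto simp: in_set_conv_nth)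
  then show ?thesis using assms unfolding perms_def by (intro exI[of _ "Suc p"]) auto
qed

lemma perm_Inv_perms:
  assumes "\<sigma> \<in> perms k"
  shows "perm_Inv \<sigma> = {(i,j). 1 \<le> i \<and> i < j \<and> j \<le> k \<and> \<sigma> ! (i - 1) > \<sigma> ! (j - 1)}"
  using assms unfolding perm_Inv_def perms_def by auto

lemma isinv_perm_Inv:
  assumes "\<sigma> \<in> perms k"
  shows "isinv k (perm_Inv \<sigma>)"
  unfolding isinv_def perm_Inv_perms[OF assms] Pk_def trans_def cotrans_def
  by auto

definition ltI :: "(nat \<times> nat) set \<Rightarrow> nat \<Rightarrow> nat \<Rightarrow> bool" where
  "ltI I j i \<longleftrightarrow> (j < i \<and> (j,i) \<notin> I) \<or> (i < j \<and> (i,j) \<in> I)"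

lemma ltI_perm:
  assumes "\<sigma> \<in> perms k" "1 \<le> i" "i \<le> k" "1 \<le> j" "j \<le> k"
  shows "ltI (perm_Inv \<sigma>) j i \<longleftrightarrow> \<sigma> ! (j - 1) < \<sigma> ! (i - 1)"
proof -
  have "i = j \<longleftrightarrow> \<sigma> ! (j - 1) = \<sigma> ! (i - 1)" using perms_sv_inj[OF assms(1) assms(2-5)] by auto
  then show ?thesis unfolding ltI_def perm_Inv_perms[OF assms(1)] using assms
    by (auto simp: not_less_iff_gr_or_eq)
qed

lemma rank_perm:
  assumes "\<sigma> \<in> perms k" "1 \<le> i" "i \<le> k"
  shows "\<sigma> ! (i - 1) = Suc (card {j \<in> {1..k}. \<sigma> ! (j - 1) < \<sigma> ! (i - 1)})"
proof -
  let ?v = "\<sigma> ! (i - 1)"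
  have v: "?v \<in> {1..k}" using perms_sv[OF assms] .
  have inj: "inj_on (\<lambda>j. \<sigma> ! (j - 1)) {j \<in> {1..k}. \<sigma> ! (j - 1) < ?v}"
    using perms_sv_inj[OF assms(1)] by (auto simp: inj_on_def)
  have img: "(\<lambda>j. \<sigma> ! (j - 1)) ` {j \<in> {1..k}. \<sigma> ! (j - 1) < ?v} = {1..<?v}"
  proof
    show "(\<lambda>j. \<sigma> ! (j - 1)) ` {j \<in> {1..k}. \<sigma> ! (j - 1) < ?v} \<subseteq> {1..<?v}"
      using perms_sv[OF assms(1)] by fastforce
    show "{1..<?v} \<subseteq> (\<lambda>j. \<sigma> ! (j - 1)) ` {j \<in> {1..k}. \<sigma> ! (j - 1) < ?v}"
    proof
      fix x assume x: "x \<in> {1..<?v}"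
      then have "x \<in> {1..k}" using v by auto
      then obtain j where "1 \<le> j" "j \<le> k" "\<sigma> ! (j - 1) = x" using perms_sv_surj[OF assms(1)] by blast
      then show "x \<in> (\<lambda>j. \<sigma> ! (j - 1)) ` {j \<in> {1..k}. \<sigma> ! (j - 1) < ?v}" using x by force
    qed
  qed
  have "card {j \<in> {1..k}. \<sigma> ! (j - 1) < ?v} = card {1..<?v}"
    using card_image[OF inj] img by simp
  then show ?thesis using v by simp
qed

lemma perm_Inv_inj:
  assumes "\<sigma> \<in> perms k" "\<tau> \<in> perms k" "perm_Inv \<sigma> = perm_Inv \<tau>"
  shows "\<sigma> = \<tau>"
proof (rule nth_equalityI)
  show "length \<sigma> = length \<tau>" using assms unfolding perms_def by simp
  fix p assume p: "p < length \<sigma>"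
  then have k: "1 \<le> Suc p" "Suc p \<le> k" using assms unfolding perms_def by auto
  have "{j \<in> {1..k}. \<sigma> ! (j - 1) < \<sigma> ! (Suc p - 1)} = {j \<in> {1..k}. \<tau> ! (j - 1) < \<tau> ! (Suc p - 1)}"
    using ltI_perm[OF assms(1) k] ltI_perm[OF assms(2) k] assms(3) by auto
  then show "\<sigma> ! p = \<tau> ! p"
    using rank_perm[OF assms(1) k] rank_perm[OF assms(2) k] by simp
qed

lemma ltI_trans:
  assumes "isinv k I" "ltI I a b" "ltI I b c"
  shows "ltI I a c"
proof -
  have t: "trans I" and ct: "cotrans I" and sub: "I \<subseteq> Pk k" using assms(1) unfolding isinv_def by auto
  have irr: "(x,x) \<notin> I" for x using sub unfolding Pk_def by auto
  have "(a < c \<and> (a, c) \<notin> I) \<or> (c < a \<and> (c, a) \<in> I)"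
    using assms(2,3) unfolding ltI_def
  proof (elim disjE conjE)
    assume "a < b" "(a,b) \<notin> I" "b < c" "(b,c) \<notin> I" then show ?thesis using ct unfolding cotrans_def by auto
  next
    assume h: "a < b" "(a,b) \<notin> I" "c < b" "(c,b) \<in> I"
    show ?thesis
    proof (cases "a < c")
      case True then show ?thesis using h t unfolding trans_def by blast
    next
      case False
      then have "c < a \<or> c = a" by auto
      then show ?thesis using h ct unfolding cotrans_def by auto
    qed
  next
    assume h: "b < a" "(b,a) \<in> I" "b < c" "(b,c) \<notin> I"
    show ?thesis
    proof (cases "a < c")
      case True then show ?thesis using h t unfolding trans_def by blast
    next
      case False
      then have "c < a \<or> c = a" by auto
      then show ?thesis using h ct unfolding cotrans_def by auto
    qed
  next
    assume "b < a" "(b,a) \<in> I" "c < b" "(c,b) \<in> I" then show ?thesis using t unfolding trans_def by auto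
  qed
  then show ?thesis unfolding ltI_def .
qed

lemma isinv_perm_exists:
  assumes "isinv k I"
  shows "\<exists>\<sigma> \<in> perms k. perm_Inv \<sigma> = I"
proof -
  have sub: "I \<subseteq> Pk k" using assms unfolding isinv_def by auto
  define r where "r i = Suc (card {j \<in> {1..k}. ltI I j i})" for i
  define \<sigma> where "\<sigma> = map r [1..<k+1]"
  have sv: "\<sigma> ! (i - 1) = r i" if "1 \<le> i" "i \<le> k" for i
    using that unfolding \<sigma>_def by (subst nth_map) (auto simp del: upt_Suc simp add: nth_upt)
  have irr: "\<not> ltI I i i" for i unfolding ltI_def by auto
  have mono: "r a < r b" if "ltI I a b" "a \<in> {1..k}" for a b
  proof -
    have "{j \<in> {1..k}. ltI I j a} \<subset> {j \<in> {1..k}. ltI I j b}"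
      using ltI_trans[OF assms _ that(1)] that irr by blast
    then show ?thesis unfolding r_def by (simp add: psubset_card_mono)
  qed
  have tot: "ltI I a b \<or> ltI I b a" if "a \<noteq> b" for a b
    using that unfolding ltI_def by auto
  have rng: "r i \<in> {1..k}" if "i \<in> {1..k}" for i
  proof -
    have "{j \<in> {1..k}. ltI I j i} \<subseteq> {1..k} - {i}" using irr by auto
    then have "card {j \<in> {1..k}. ltI I j i} \<le> card ({1..k} - {i})" by (intro card_mono) auto
    then show ?thesis using that unfolding r_def by auto
  qed
  have injr: "inj_on r {1..k}"
  proof (rule inj_onI)
    fix a b assume "a \<in> {1..k}" "b \<in> {1..k}" "r a = r b"
    then show "a = b" using tot[of a b] mono[of a b] mono[of b a] by (cases "a=b") auto
  qed
  have len: "length \<sigma> = k" unfolding \<sigma>_def by simp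
  have su: "set [1..<k+1] = {1..k}" by (simp only: set_upt) auto
  have dist: "distinct \<sigma>" unfolding \<sigma>_def distinct_map su using injr by simp
  have setsub: "set \<sigma> \<subseteq> {1..k}" unfolding \<sigma>_def set_map su using rng by auto
  have "card (set \<sigma>) = k" using dist len distinct_card by blast
  then have "set \<sigma> = {1..k}" using setsub by (simp add: card_subset_eq)
  then have P: "\<sigma> \<in> perms k" unfolding perms_def using len dist by auto
  have "perm_Inv \<sigma> = I"
  proof
    show "perm_Inv \<sigma> \<subseteq> I"
    proof
      fix x assume "x \<in> perm_Inv \<sigma>"
      then obtain i j where x: "x = (i,j)" "1 \<le> i" "i < j" "j \<le> k" "r i > r j"
        unfolding perm_Inv_perms[OF P] using sv by auto
      have "\<not> ltI I i j" using mono[of i j] x by force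
      then show "x \<in> I" using x unfolding ltI_def by auto
    qed
    show "I \<subseteq> perm_Inv \<sigma>"
    proof
      fix x assume xI: "x \<in> I"
      then obtain i j where x: "x = (i,j)" "1 \<le> i" "i < j" "j \<le> k" using sub unfolding Pk_def by auto
      have "ltI I j i" using x xI unfolding ltI_def by auto
      then have "r j < r i" using mono x by auto
      then show "x \<in> perm_Inv \<sigma>" unfolding perm_Inv_perms[OF P] using x sv by auto
    qed
  qed
  then show ?thesis using P by blast
qed

lemma trancl_sub: "R \<subseteq> S \<Longrightarrow> trans S \<Longrightarrow> R\<^sup>+ \<subseteq> S"
  by (metis subsetI trancl_id trancl_mono)

lemma trancl_Pk:
  assumes "R \<subseteq> Pk k" shows "R\<^sup>+ \<subseteq> Pk k"
  using trancl_sub[OF assms trans_Pk] .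

lemma cotrans_trancl:
  assumes "cotrans I" "cotrans J" "I \<subseteq> Pk k" "J \<subseteq> Pk k"
  shows "cotrans ((I \<union> J)\<^sup>+)"
proof -
  have sub: "(I \<union> J)\<^sup>+ \<subseteq> Pk k" using trancl_Pk assms(3,4) by (metis Un_least)
  have cu: "cotrans (I \<union> J)" using assms(1,2) unfolding cotrans_def by blast
  have "\<forall>b. a < b \<and> b < c \<longrightarrow> (a,b) \<in> (I \<union> J)\<^sup>+ \<or> (b,c) \<in> (I \<union> J)\<^sup>+"
    if "(a,c) \<in> (I \<union> J)\<^sup>+" for a c
    using that
  proof (induction rule: trancl_induct)
    case (base y)
    then show ?case using cu unfolding cotrans_def by blast
  next
    case (step y z)
    have yz: "y < z" using step(2) assms(3,4) unfolding Pk_def by auto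
    show ?case
    proof (intro allI impI)
      fix b assume b: "a < b \<and> b < z"
      consider "b < y" | "b = y" | "y < b" by linarith
      then show "(a,b) \<in> (I \<union> J)\<^sup>+ \<or> (b,z) \<in> (I \<union> J)\<^sup>+"
      proof cases
        case 1
        then show ?thesis using step b by (meson trancl.simps)
      next
        case 2 then show ?thesis using step by auto
      next
        case 3
        then have "(y,b) \<in> I \<union> J \<or> (b,z) \<in> I \<union> J" using cu step(2) b unfolding cotrans_def by blast
        then show ?thesis using step(1) by (meson r_into_trancl' trancl.trancl_into_trancl)
      qed
    qed
  qed
  then show ?thesis unfolding cotrans_def by blast
qed

lemma isinv_trancl:
  assumes "isinv k I" "isinv k J"
  shows "isinv k ((I \<union> J)\<^sup>+)"
  using assms cotrans_trancl trancl_Pk unfolding isinv_def by (metis Un_least trans_trancl)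

lemma isinv_compl:
  assumes "isinv k I"
  shows "isinv k (Pk k - I)"
proof -
  have t: "trans I" and ct: "cotrans I" and sub: "I \<subseteq> Pk k" using assms unfolding isinv_def by auto
  have "trans (Pk k - I)" unfolding trans_def
  proof (intro allI impI)
    fix x y z assume a: "(x,y) \<in> Pk k - I" "(y,z) \<in> Pk k - I"
    then have xyz: "x < y" "y < z" "(x,z) \<in> Pk k" unfolding Pk_def by auto
    have "(x,z) \<notin> I"
    proof
      assume "(x,z) \<in> I"
      then have "(x,y) \<in> I \<or> (y,z) \<in> I" using ct xyz unfolding cotrans_def by blast
      then show False using a by blast
    qed
    then show "(x,z) \<in> Pk k - I" using xyz by blast
  qed
  moreover have "cotrans (Pk k - I)" unfolding cotrans_def
  proof (intro allI impI)
    fix i j l assume a: "(i,l) \<in> Pk k - I \<and> i < j \<and> j < l"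
    then have "(i,j) \<in> Pk k" "(j,l) \<in> Pk k" unfolding Pk_def by auto
    moreover have "\<not> ((i,j) \<in> I \<and> (j,l) \<in> I)" using a t unfolding trans_def by blast
    ultimately show "(i,j) \<in> Pk k - I \<or> (j,l) \<in> Pk k - I" by blast
  qed
  ultimately show ?thesis unfolding isinv_def by auto
qed

lemma perm_join_char:
  assumes "\<sigma> \<in> perms k" "\<tau> \<in> perms k"
  shows "perm_join \<sigma> \<tau> \<in> perms k \<and> perm_Inv (perm_join \<sigma> \<tau>) = (perm_Inv \<sigma> \<union> perm_Inv \<tau>)\<^sup>+"
proof -
  have "isinv k ((perm_Inv \<sigma> \<union> perm_Inv \<tau>)\<^sup>+)"
    using isinv_trancl isinv_perm_Inv assms by blast
  then obtain \<rho> where \<rho>: "\<rho> \<in> perms k" "perm_Inv \<rho> = (perm_Inv \<sigma> \<union> perm_Inv \<tau>)\<^sup>+"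
    using isinv_perm_exists by blast
  have lk: "length \<sigma> = k" using assms unfolding perms_def by auto
  have lub: "is_lub_on perm_le (perms (length \<sigma>)) \<sigma> \<tau> \<rho>"
  proof -
    have "(perm_Inv \<sigma> \<union> perm_Inv \<tau>)\<^sup>+ \<subseteq> perm_Inv z'" if "z' \<in> perms k"
      "perm_Inv \<sigma> \<subseteq> perm_Inv z'" "perm_Inv \<tau> \<subseteq> perm_Inv z'" for z'
      using trancl_sub[of "perm_Inv \<sigma> \<union> perm_Inv \<tau>" "perm_Inv z'"] that isinv_perm_Inv[OF that(1)]
      unfolding isinv_def by auto
    then show ?thesis unfolding is_lub_on_def perm_le_def lk using \<rho> by auto
  qed
  have "\<rho>' = \<rho>" if h: "is_lub_on perm_le (perms (length \<sigma>)) \<sigma> \<tau> \<rho>'" for \<rho>'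
  proof -
    have a: "\<rho>' \<in> perms k" "perm_le \<sigma> \<rho>'" "perm_le \<tau> \<rho>'"
      and b: "\<forall>z'\<in>perms k. perm_le \<sigma> z' \<and> perm_le \<tau> z' \<longrightarrow> perm_le \<rho>' z'"
      using h unfolding is_lub_on_def lk by auto
    have c: "\<rho> \<in> perms k" "perm_le \<sigma> \<rho>" "perm_le \<tau> \<rho>"
      and d: "\<forall>z'\<in>perms k. perm_le \<sigma> z' \<and> perm_le \<tau> z' \<longrightarrow> perm_le \<rho> z'"
      using lub unfolding is_lub_on_def lk by auto
    have "perm_le \<rho>' \<rho>" using b c by blast
    moreover have "perm_le \<rho> \<rho>'" using d a by blast
    ultimately have "perm_Inv \<rho>' = perm_Inv \<rho>" unfolding perm_le_def by blast
    then show ?thesis using perm_Inv_inj a(1) c(1) by blast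
  qed
  then have "perm_join \<sigma> \<tau> = \<rho>" unfolding perm_join_def using lub by (rule the_equality[rotated])
  then show ?thesis using \<rho> by simp
qed


lemma perm_meet_char:
  assumes "\<sigma> \<in> perms k" "\<tau> \<in> perms k"
  shows "perm_meet \<sigma> \<tau> \<in> perms k \<and>
    perm_Inv (perm_meet \<sigma> \<tau>) = Pk k - ((Pk k - perm_Inv \<sigma>) \<union> (Pk k - perm_Inv \<tau>))\<^sup>+"
proof -
  let ?C = "(Pk k - perm_Inv \<sigma>) \<union> (Pk k - perm_Inv \<tau>)"
  have "isinv k (Pk k - ?C\<^sup>+)"
    using isinv_compl isinv_trancl isinv_perm_Inv assms by blast
  then obtain \<rho> where \<rho>: "\<rho> \<in> perms k" "perm_Inv \<rho> = Pk k - ?C\<^sup>+"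
    using isinv_perm_exists by blast
  have lk: "length \<sigma> = k" using assms unfolding perms_def by auto
  have subs: "perm_Inv \<sigma> \<subseteq> Pk k" "perm_Inv \<tau> \<subseteq> Pk k"
    using isinv_perm_Inv assms unfolding isinv_def by auto
  have glb: "is_glb_on perm_le (perms (length \<sigma>)) \<sigma> \<tau> \<rho>"
  proof -
    have "perm_Inv z' \<subseteq> Pk k - ?C\<^sup>+" if "z' \<in> perms k"
      "perm_Inv z' \<subseteq> perm_Inv \<sigma>" "perm_Inv z' \<subseteq> perm_Inv \<tau>" for z'
    proof -
      have i: "isinv k (Pk k - perm_Inv z')" using isinv_compl isinv_perm_Inv that(1) by blast
      have "?C \<subseteq> Pk k - perm_Inv z'" using that by blast
      then have "?C\<^sup>+ \<subseteq> Pk k - perm_Inv z'" using trancl_sub i unfolding isinv_def by blast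
      moreover have "perm_Inv z' \<subseteq> Pk k" using isinv_perm_Inv[OF that(1)] unfolding isinv_def by auto
      ultimately show ?thesis by blast
    qed
    moreover have "Pk k - ?C\<^sup>+ \<subseteq> perm_Inv \<sigma>" "Pk k - ?C\<^sup>+ \<subseteq> perm_Inv \<tau>"
      by auto
    ultimately show ?thesis unfolding is_glb_on_def perm_le_def lk using \<rho> by auto
  qed
  have "\<rho>' = \<rho>" if h: "is_glb_on perm_le (perms (length \<sigma>)) \<sigma> \<tau> \<rho>'" for \<rho>'
  proof -
    have a: "\<rho>' \<in> perms k" "perm_le \<rho>' \<sigma>" "perm_le \<rho>' \<tau>"
      and b: "\<forall>z'\<in>perms k. perm_le z' \<sigma> \<and> perm_le z' \<tau> \<longrightarrow> perm_le z' \<rho>'"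
      using h unfolding is_glb_on_def lk by auto
    have c: "\<rho> \<in> perms k" "perm_le \<rho> \<sigma>" "perm_le \<rho> \<tau>"
      and d: "\<forall>z'\<in>perms k. perm_le z' \<sigma> \<and> perm_le z' \<tau> \<longrightarrow> perm_le z' \<rho>"
      using glb unfolding is_glb_on_def lk by auto
    have "perm_le \<rho> \<rho>'" using b c by blast
    moreover have "perm_le \<rho>' \<rho>" using d a by blast
    ultimately have "perm_Inv \<rho>' = perm_Inv \<rho>" unfolding perm_le_def by blast
    then show ?thesis using perm_Inv_inj a(1) c(1) by blast
  qed
  then have "perm_meet \<sigma> \<tau> = \<rho>" unfolding perm_meet_def using glb by (rule the_equality[rotated])
  then show ?thesis using \<rho> by simp
qed

lemma tc_X:
  assumes "I \<subseteq> Pk k" "J \<subseteq> Pk k" "trans I" "trans J" "I \<inter> X = J \<inter> X"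
    and X: "\<And>a b c. (a,c) \<in> X \<Longrightarrow> a < b \<Longrightarrow> b < c \<Longrightarrow> (a,b) \<in> X"
  shows "(I \<union> J)\<^sup>+ \<inter> X \<subseteq> I"
proof -
  have sub: "(I \<union> J)\<^sup>+ \<subseteq> Pk k" using trancl_Pk assms(1,2) by (metis Un_least)
  have "(a,c) \<in> X \<longrightarrow> (a,c) \<in> I \<and> (a,c) \<in> J" if "(a,c) \<in> (I \<union> J)\<^sup>+" for a c
    using that
  proof (induction rule: trancl_induct)
    case (base y)
    then show ?case using assms(5) by blast
  next
    case (step y z)
    show ?case
    proof
      assume az: "(a,z) \<in> X"
      have "a < y" using step(1) sub unfolding Pk_def by auto
      moreover have "y < z" using step(2) assms(1,2) unfolding Pk_def by auto
      ultimately have "(a,y) \<in> X" using X az by blast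
      then have "(a,y) \<in> I" "(a,y) \<in> J" using step(3) by auto
      then have "(a,z) \<in> I \<or> (a,z) \<in> J" using step(2) assms(3,4) unfolding trans_def by blast
      then show "(a,z) \<in> I \<and> (a,z) \<in> J" using az assms(5) by blast
    qed
  qed
  then show ?thesis by auto
qed

lemma descent:
  assumes "\<sigma> \<in> perms k" "\<tau> \<in> perms k" "perm_Inv \<sigma> \<subseteq> perm_Inv \<tau>" "perm_Inv \<sigma> \<noteq> perm_Inv \<tau>"
  shows "\<exists>i j. (i,j) \<in> perm_Inv \<tau> - perm_Inv \<sigma> \<and> \<tau> ! (i - 1) = Suc (\<tau> ! (j - 1))"
proof -
  define s where "s x = \<sigma> ! (x - 1)" for x
  define t where "t x = \<tau> ! (x - 1)" for x
  have S: "perm_Inv \<sigma> = {(i,j). 1 \<le> i \<and> i < j \<and> j \<le> k \<and> s i > s j}"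
    using perm_Inv_perms[OF assms(1)] unfolding s_def .
  have Tt: "perm_Inv \<tau> = {(i,j). 1 \<le> i \<and> i < j \<and> j \<le> k \<and> t i > t j}"
    using perm_Inv_perms[OF assms(2)] unfolding t_def .
  have sinj: "s x \<noteq> s y" if "1 \<le> x" "x \<le> k" "1 \<le> y" "y \<le> k" "x \<noteq> y" for x y
    using perms_sv_inj[OF assms(1)] that unfolding s_def by blast
  obtain p where p: "p \<in> perm_Inv \<tau> - perm_Inv \<sigma>" using assms(3,4) by blast
  obtain q where q: "q \<in> perm_Inv \<tau> - perm_Inv \<sigma>"
    "\<And>y. y \<in> perm_Inv \<tau> - perm_Inv \<sigma> \<Longrightarrow> t (fst q) - t (snd q) \<le> t (fst y) - t (snd y)"
    using ex_has_least_nat[of "\<lambda>x. x \<in> perm_Inv \<tau> - perm_Inv \<sigma>" p "\<lambda>x. t (fst x) - t (snd x)"] p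
    by blast
  obtain i j where ij: "q = (i,j)" by (cases q)
  have ijf: "1 \<le> i" "i < j" "j \<le> k" "t i > t j" "s i < s j"
    using q(1) sinj[of i j] unfolding ij S Tt by auto
  have minim: "\<And>x y. 1 \<le> x \<Longrightarrow> x < y \<Longrightarrow> y \<le> k \<Longrightarrow> t x > t y \<Longrightarrow> t x - t y < t i - t j \<Longrightarrow> s x > s y"
  proof -
    fix x y assume h: "1 \<le> x" "x < y" "y \<le> k" "t x > t y" "t x - t y < t i - t j"
    show "s x > s y"
    proof (rule ccontr)
      assume "\<not> s x > s y"
      then have "(x,y) \<in> perm_Inv \<tau> - perm_Inv \<sigma>" using h unfolding S Tt by auto
      then show False using q(2)[of "(x,y)"] h unfolding ij by auto
    qed
  qed
  show ?thesis
  proof (cases "t i = Suc (t j)")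
    case True then show ?thesis using q(1) unfolding ij t_def by blast
  next
    case False
    let ?c = "Suc (t j)"
    have ti: "t i \<in> {1..k}" "t j \<in> {1..k}" using perms_sv[OF assms(2)] ijf unfolding t_def by auto
    have c: "?c \<in> {1..k}" "?c < t i" using False ijf ti by auto
    obtain l where l: "1 \<le> l" "l \<le> k" "t l = ?c" using perms_sv_surj[OF assms(2) c(1)] unfolding t_def by blast
    have lij: "l \<noteq> i" "l \<noteq> j" using l c by auto
    consider "l < i" | "i < l \<and> l < j" | "j < l" using lij by linarith
    then show ?thesis
    proof cases
      case 1
      have "s l > s j" using minim[of l j] l ijf 1 c by auto
      moreover have "(l,i) \<notin> perm_Inv \<tau>" using l c unfolding Tt by auto
      then have "(l,i) \<notin> perm_Inv \<sigma>" using assms(3) by blast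
      then have "s l < s i" using sinj[of l i] l ijf 1 unfolding S by auto
      ultimately show ?thesis using ijf by auto
    next
      case 2
      have "s i > s l" using minim[of i l] l ijf 2 c by auto
      moreover have "s l > s j" using minim[of l j] l ijf 2 c by auto
      ultimately show ?thesis using ijf by auto
    next
      case 3
      have "s i > s l" using minim[of i l] l ijf 3 c by auto
      moreover have "(j,l) \<notin> perm_Inv \<tau>" using l c unfolding Tt by auto
      then have "(j,l) \<notin> perm_Inv \<sigma>" using assms(3) by blast
      then have "s j < s l" using sinj[of l j] l ijf 3 unfolding S by auto
      ultimately show ?thesis using ijf by auto
    qed
  qed
qed

definition sw :: "nat \<Rightarrow> nat \<Rightarrow> nat" where
  "sw a x = (if x = a then a + 1 else if x = a + 1 then a else x)"

lemma sw_sw[simp]: "sw a (sw a x) = x" unfolding sw_def by auto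

lemma inj_sw: "inj (sw a)" by (metis injI sw_sw)

lemma swap_perm:
  assumes "\<tau> \<in> perms k" "1 \<le> a" "a < k"
  shows "map (sw a) \<tau> \<in> perms k"
proof -
  have "sw a ` {1..k} = {1..k}"
  proof
    show "sw a ` {1..k} \<subseteq> {1..k}" using assms unfolding sw_def by auto
    then show "{1..k} \<subseteq> sw a ` {1..k}" by (metis image_subset_iff subsetI sw_sw)
  qed
  moreover have "inj_on (sw a) (set \<tau>)" using inj_sw inj_on_subset by blast
  ultimately show ?thesis using assms unfolding perms_def
    by (auto simp: distinct_map)
qed

lemma swap_Inv:
  assumes "\<tau> \<in> perms k" "1 \<le> i" "i < j" "j \<le> k" "\<tau> ! (i - 1) = Suc a" "\<tau> ! (j - 1) = a"
  shows "map (sw a) \<tau> \<in> perms k \<and> perm_Inv (map (sw a) \<tau>) = perm_Inv \<tau> - {(i,j)}"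
proof -
  have a: "1 \<le> a" "a < k" using perms_sv[OF assms(1), of j] perms_sv[OF assms(1), of i] assms by auto
  have P: "map (sw a) \<tau> \<in> perms k" using swap_perm[OF assms(1) a] .
  have lk: "length \<tau> = k" using assms unfolding perms_def by auto
  have "perm_Inv (map (sw a) \<tau>) = perm_Inv \<tau> - {(i,j)}"
  proof -
    have key: "(sw a (\<tau> ! (p - 1)) > sw a (\<tau> ! (q - 1))) \<longleftrightarrow> (\<tau> ! (p - 1) > \<tau> ! (q - 1) \<and> (p,q) \<noteq> (i,j))"
      if "1 \<le> p" "p < q" "q \<le> k" for p q
    proof -
      have ne: "\<tau> ! (p - 1) \<noteq> \<tau> ! (q - 1)" using perms_sv_inj[OF assms(1), of p q] that by auto
      have pi: "\<tau> ! (p - 1) = Suc a \<longleftrightarrow> p = i" using perms_sv_inj[OF assms(1), of p i] that assms by auto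
      have qj: "\<tau> ! (q - 1) = a \<longleftrightarrow> q = j" using perms_sv_inj[OF assms(1), of q j] that assms by auto
      have pj: "\<tau> ! (p - 1) = a \<longleftrightarrow> p = j" using perms_sv_inj[OF assms(1), of p j] that assms by auto
      have qi: "\<tau> ! (q - 1) = Suc a \<longleftrightarrow> q = i" using perms_sv_inj[OF assms(1), of q i] that assms by auto
      show ?thesis using ne pi qj pj qi that assms(3) unfolding sw_def by auto
    qed
    show ?thesis
      unfolding perm_Inv_perms[OF P] perm_Inv_perms[OF assms(1)] using key lk by auto
  qed
  then show ?thesis using P by simp
qed



lemma T_sw: "T a = map (sw a)"
  unfolding T_def sw_def by (rule ext) simp

lemma fibre_map_inj:
  assumes "inj f" shows "fibre (map f w) (f b) = fibre w b"
  using assms unfolding fibre_def by (auto simp: inj_eq)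

lemma setpar_map_inj:
  assumes "inj f" shows "setpar (map f w) = setpar w"
  unfolding setpar_def using fibre_map_inj[OF assms] by auto

lemma pcover_setpar:
  assumes "pcover n u w" shows "setpar u = setpar w"
  using assms unfolding pcover_def T_sw using setpar_map_inj[OF inj_sw] by auto

lemma pcover_card:
  assumes "pcover n u w" shows "card (iInv w) = card (iInv u) + 1"
  using assms unfolding pcover_def by auto

lemma tranclp_pcover:
  assumes "(pcover n)\<^sup>+\<^sup>+ u w"
  shows "card (iInv u) < card (iInv w) \<and> setpar u = setpar w \<and> u \<in> PW n \<and> w \<in> PW n"
  using assms
proof (induction rule: tranclp_induct)
  case (base y) then show ?case using pcover_card pcover_setpar unfolding pcover_def by fastforce
next
  case (step y z) then show ?case using pcover_card pcover_setpar unfolding pcover_def by fastforce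
qed

lemma pwo_lt_tranclp:
  assumes "pwo_lt n u w" shows "(pcover n)\<^sup>+\<^sup>+ u w"
  using assms unfolding pwo_lt_def pwo_le_def by auto

lemma pcover_hasse:
  assumes "pcover n u w" shows "hasse n u w"
proof -
  have c: "card (iInv w) = card (iInv u) + 1" using pcover_card[OF assms] .
  have lt: "pwo_lt n u w" unfolding pwo_lt_def pwo_le_def using assms c by auto
  have "\<not> (pwo_lt n u z \<and> pwo_lt n z w)" for z
    using tranclp_pcover[OF pwo_lt_tranclp, of n u z] tranclp_pcover[OF pwo_lt_tranclp, of n z w] c
    by auto
  then show ?thesis unfolding hasse_def using lt by blast
qed

lemma hasse_tranclp:
  assumes "hasse n u w" shows "(pcover n)\<^sup>+\<^sup>+ u w"
  using assms unfolding hasse_def using pwo_lt_tranclp by blast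

lemma pconn_step: "hasse n u w \<Longrightarrow> pconn n u w" "hasse n u w \<Longrightarrow> pconn n w u"
  unfolding pconn_def by (auto intro: r_into_rtranclp)

lemma pconn_trans: "pconn n u v \<Longrightarrow> pconn n v w \<Longrightarrow> pconn n u w"
  unfolding pconn_def by (rule rtranclp_trans)

lemma pconn_refl: "pconn n u u"
  unfolding pconn_def by simp

lemma pconn_sym:
  assumes "pconn n u w" shows "pconn n w u"
  using assms unfolding pconn_def
proof (induction rule: rtranclp_induct)
  case base then show ?case by simp
next
  case (step y z)
  then have "(\<lambda>u w. hasse n u w \<or> hasse n w u) z y" by blast
  then show ?case using step(3) by (rule converse_rtranclp_into_rtranclp)
qed

lemma tranclp_pconn:
  assumes "(pcover n)\<^sup>+\<^sup>+ u w" shows "pconn n u w"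
  using assms
proof (induction rule: tranclp_induct)
  case (base y)
  then show ?case using pcover_hasse pconn_step by blast
next
  case (step y z)
  then have "pconn n y z" using pcover_hasse pconn_step by blast
  then show ?case using step(3) pconn_trans by blast
qed

lemma pwo_le_pconn:
  assumes "pwo_le n u w" shows "pconn n u w"
  using assms tranclp_pconn pconn_refl unfolding pwo_le_def by blast

lemma setcomp_cong: "(\<And>i. i < k \<Longrightarrow> f i = g i) \<Longrightarrow> {f i | i. i < k} = {g i | i. i < (k::nat)}"
  by (metis (no_types, lifting))

locale opart =
  fixes n :: nat and Bs :: "nat set list"
  assumes op: "ordered_partition n Bs"
begin

abbreviation "k \<equiv> length Bs"

lemma Bs_ne: "i < k \<Longrightarrow> Bs ! i \<noteq> {}" using op unfolding ordered_partition_def by auto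
lemma Bs_sub: "i < k \<Longrightarrow> Bs ! i \<subseteq> {1..n}" using op unfolding ordered_partition_def by auto
lemma Bs_union: "\<Union>(set Bs) = {1..n}" using op unfolding ordered_partition_def by auto
lemma Bs_disj: "i < k \<Longrightarrow> j < k \<Longrightarrow> i \<noteq> j \<Longrightarrow> Bs ! i \<inter> Bs ! j = {}"
  using op unfolding ordered_partition_def by auto
lemma Bs_min: "i < j \<Longrightarrow> j < k \<Longrightarrow> Min (Bs ! i) < Min (Bs ! j)"
  using op unfolding ordered_partition_def by auto
lemma Bs_fin: "i < k \<Longrightarrow> finite (Bs ! i)" using Bs_sub finite_subset by blast
lemma Bs_Min_in: "i < k \<Longrightarrow> Min (Bs ! i) \<in> Bs ! i" using Bs_fin Bs_ne by (intro Min_in)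
lemma Bs_Max_in: "i < k \<Longrightarrow> Max (Bs ! i) \<in> Bs ! i" using Bs_fin Bs_ne by (intro Max_in)
lemma Bs_min_le: "i < j \<Longrightarrow> j < k \<Longrightarrow> Min (Bs ! i) \<le> Min (Bs ! j)" using Bs_min by fastforce
lemma Bs_min_inj: "i < k \<Longrightarrow> j < k \<Longrightarrow> Min (Bs ! i) < Min (Bs ! j) \<Longrightarrow> i < j"
  using Bs_min by (metis less_asym nat_neq_iff)

lemma ex_blk: "p \<in> {1..n} \<Longrightarrow> \<exists>i<k. p \<in> Bs ! i"
proof -
  assume "p \<in> {1..n}"
  then obtain B where "B \<in> set Bs" "p \<in> B" using Bs_union by blast
  then show ?thesis by (metis in_set_conv_nth)
qed

definition blk :: "nat \<Rightarrow> nat" where "blk p = (THE i. i < k \<and> p \<in> Bs ! i)"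

lemma blk_eq: "i < k \<Longrightarrow> p \<in> Bs ! i \<Longrightarrow> blk p = i"
  unfolding blk_def using Bs_disj by (intro the_equality) blast+

lemma blk: "p \<in> {1..n} \<Longrightarrow> blk p < k \<and> p \<in> Bs ! blk p"
  using ex_blk blk_eq by blast

lemma card_union: "card (\<Union>(set Bs)) = n" using Bs_union by simp

lemma pw_alt: "pw Bs \<sigma> = map (\<lambda>p. \<sigma> ! blk p) [1..<n+1]"
  unfolding pw_def card_union blk_def ..

lemma pw_len[simp]: "length (pw Bs \<sigma>) = n" unfolding pw_alt by simp

lemma pw_nth: "1 \<le> p \<Longrightarrow> p \<le> n \<Longrightarrow> pw Bs \<sigma> ! (p - 1) = \<sigma> ! blk p"
  unfolding pw_alt by (subst nth_map) (auto simp del: upt_Suc simp add: nth_upt)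

lemma set_pw:
  assumes "length \<sigma> = k" shows "set (pw Bs \<sigma>) = set \<sigma>"
proof
  show "set (pw Bs \<sigma>) \<subseteq> set \<sigma>"
  proof
    fix x assume "x \<in> set (pw Bs \<sigma>)"
    then obtain q where "q < n" "pw Bs \<sigma> ! q = x" by (auto simp: in_set_conv_nth)
    then have "x = \<sigma> ! blk (Suc q)" using pw_nth[of "Suc q"] by auto
    moreover have "blk (Suc q) < k" using blk[of "Suc q"] \<open>q < n\<close> by auto
    ultimately show "x \<in> set \<sigma>" using assms by auto
  qed
  show "set \<sigma> \<subseteq> set (pw Bs \<sigma>)"
  proof
    fix x assume "x \<in> set \<sigma>"
    then obtain i where i: "i < k" "\<sigma> ! i = x" using assms by (auto simp: in_set_conv_nth)
    let ?p = "Min (Bs ! i)"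
    have p: "?p \<in> Bs ! i" "?p \<in> {1..n}" using Bs_Min_in[OF i(1)] Bs_sub[OF i(1)] by auto
    have "pw Bs \<sigma> ! (?p - 1) = x" using pw_nth[of ?p] p blk_eq[OF i(1) p(1)] i by auto
    moreover have "?p - 1 < n" using p by auto
    ultimately show "x \<in> set (pw Bs \<sigma>)" by (metis nth_mem pw_len)
  qed
qed

lemma fibre_pw:
  assumes "\<sigma> \<in> perms k" "i < k"
  shows "fibre (pw Bs \<sigma>) (\<sigma> ! i) = Bs ! i"
proof -
  have "fibre (pw Bs \<sigma>) (\<sigma> ! i) = {p. 1 \<le> p \<and> p \<le> n \<and> \<sigma> ! blk p = \<sigma> ! i}"
    unfolding fibre_def using pw_nth by auto
  also have "\<dots> = {p. 1 \<le> p \<and> p \<le> n \<and> blk p = i}"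
  proof -
    have "\<sigma> ! blk p = \<sigma> ! i \<longleftrightarrow> blk p = i" if "1 \<le> p" "p \<le> n" for p
      using blk[of p] that assms unfolding perms_def by (auto simp: nth_eq_iff_index_eq)
    then show ?thesis by auto
  qed
  also have "\<dots> = Bs ! i" using blk blk_eq Bs_sub assms(2) by fastforce
  finally show ?thesis .
qed

lemma pw_PW: assumes "\<sigma> \<in> perms k" shows "pw Bs \<sigma> \<in> PW n"
  using set_pw assms unfolding PW_def packed_def perms_def by auto

lemma setpar_pw:
  assumes "\<sigma> \<in> perms k" shows "setpar (pw Bs \<sigma>) = set Bs"
proof -
  have len: "length \<sigma> = k" using assms unfolding perms_def by auto
  have "setpar (pw Bs \<sigma>) = {fibre (pw Bs \<sigma>) a | a. a \<in> set \<sigma>}"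
    unfolding setpar_def set_pw[OF len] ..
  also have "\<dots> = {fibre (pw Bs \<sigma>) (\<sigma> ! i) | i. i < k}" using len by (auto simp: in_set_conv_nth)
  also have "\<dots> = {Bs ! i | i. i < k}" using fibre_pw[OF assms] by auto
  also have "\<dots> = set Bs" by (auto simp: in_set_conv_nth)
  finally show ?thesis .
qed

lemma firsts_pw:
  assumes "\<sigma> \<in> perms k" shows "firsts (pw Bs \<sigma>) = map (\<lambda>i. Min (Bs ! i)) [0..<k]"
proof -
  have len: "length \<sigma> = k" using assms unfolding perms_def by auto
  have "{Min (fibre (pw Bs \<sigma>) a) | a. a \<in> set (pw Bs \<sigma>)} = {Min (fibre (pw Bs \<sigma>) (\<sigma> ! i)) | i. i < k}"
    unfolding set_pw[OF len] using len by (auto simp: in_set_conv_nth)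
  also have "\<dots> = {Min (Bs ! i) | i. i < k}"
    by (rule setcomp_cong) (simp add: fibre_pw[OF assms])
  also have "\<dots> = set (map (\<lambda>i. Min (Bs ! i)) [0..<k])" by auto
  finally have e: "{Min (fibre (pw Bs \<sigma>) a) | a. a \<in> set (pw Bs \<sigma>)} = set (map (\<lambda>i. Min (Bs ! i)) [0..<k])" .
  have sw: "sorted_wrt (<) (map (\<lambda>i. Min (Bs ! i)) [0..<k])"
    unfolding sorted_wrt_map by (auto simp: sorted_wrt_iff_nth_less Bs_min)
  then have d: "distinct (map (\<lambda>i. Min (Bs ! i)) [0..<k])" using strict_sorted_iff by blast
  have "card (set (map (\<lambda>i. Min (Bs ! i)) [0..<k])) = length (map (\<lambda>i. Min (Bs ! i)) [0..<k])"
    using d distinct_card by blast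
  then show ?thesis unfolding firsts_def e
    using sorted_list_of_set_unique[of "set (map (\<lambda>i. Min (Bs ! i)) [0..<k])" "map (\<lambda>i. Min (Bs ! i)) [0..<k]"] sw
    by (simp only: finite_set) simp
qed

lemma delrpt_pw:
  assumes "\<sigma> \<in> perms k" shows "delrpt (pw Bs \<sigma>) = \<sigma>"
proof -
  have len: "length \<sigma> = k" using assms unfolding perms_def by auto
  show ?thesis
  proof (rule nth_equalityI)
    show "length (delrpt (pw Bs \<sigma>)) = length \<sigma>" unfolding delrpt_def firsts_pw[OF assms] len by simp
    fix i assume "i < length (delrpt (pw Bs \<sigma>))"
    then have i: "i < k" unfolding delrpt_def firsts_pw[OF assms] by simp
    have m: "Min (Bs ! i) \<in> Bs ! i" "Min (Bs ! i) \<in> {1..n}" using Bs_Min_in[OF i(1)] Bs_sub[OF i(1)] by auto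
    show "delrpt (pw Bs \<sigma>) ! i = \<sigma> ! i"
      unfolding delrpt_def firsts_pw[OF assms] using i m pw_nth[of "Min (Bs ! i)"] blk_eq[OF i m(1)] by simp
  qed
qed

lemma Inv_pw: assumes "\<sigma> \<in> perms k" shows "Inv (pw Bs \<sigma>) = perm_Inv \<sigma>"
  unfolding Inv_def delrpt_pw[OF assms] ..

lemma T_pw:
  assumes "length \<sigma> = k" shows "T a (pw Bs \<sigma>) = pw Bs (map (sw a) \<sigma>)"
  unfolding T_sw pw_alt using blk assms by auto

lemma C_pw:
  assumes "w \<in> PW n" "setpar w = set Bs"
  shows "\<exists>\<sigma>\<in>perms k. w = pw Bs \<sigma>"
proof -
  have lw: "length w = n" using assms unfolding PW_def by auto
  obtain m where m: "set w = {1..m}" using assms unfolding PW_def packed_def by auto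
  have blockfib: "\<exists>a\<in>set w. Bs ! i = fibre w a" if "i < k" for i
  proof -
    have "Bs ! i \<in> setpar w" using assms(2) that by auto
    then show ?thesis unfolding setpar_def by auto
  qed
  define \<sigma> where "\<sigma> = map (\<lambda>i. w ! (Min (Bs ! i) - 1)) [0..<k]"
  have sv: "\<sigma> ! i = w ! (Min (Bs ! i) - 1)" if "i < k" for i unfolding \<sigma>_def using that by simp
  have const: "w ! (p - 1) = \<sigma> ! i" if ik: "i < k" and pin: "p \<in> Bs ! i" for i p
  proof -
    obtain a where a: "Bs ! i = fibre w a" using blockfib ik by blast
    have "Min (Bs ! i) \<in> fibre w a" using Bs_Min_in[OF ik] a by simp
    moreover have "p \<in> fibre w a" using pin a by simp
    ultimately show ?thesis using sv[OF ik] unfolding fibre_def by auto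
  qed
  have wpw: "w = pw Bs \<sigma>"
  proof (rule nth_equalityI)
    show "length w = length (pw Bs \<sigma>)" using lw by simp
    fix q assume "q < length w"
    then have q: "1 \<le> Suc q" "Suc q \<le> n" using lw by auto
    have b: "blk (Suc q) < k" "Suc q \<in> Bs ! blk (Suc q)" using blk[of "Suc q"] q by auto
    show "w ! q = pw Bs \<sigma> ! q" using pw_nth[OF q] const[OF b] by simp
  qed
  have len: "length \<sigma> = k" unfolding \<sigma>_def by simp
  have dist: "distinct \<sigma>"
  proof -
    have "\<sigma> ! i \<noteq> \<sigma> ! j" if h: "i < k" "j < k" "i \<noteq> j" for i j
    proof
      assume eq: "\<sigma> ! i = \<sigma> ! j"
      obtain a where a: "a \<in> set w" "Bs ! i = fibre w a" using blockfib h(1) by blast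
      obtain b where b: "b \<in> set w" "Bs ! j = fibre w b" using blockfib h(2) by blast
      have "\<sigma> ! i = a" using const[OF h(1) Bs_Min_in[OF h(1)]] Bs_Min_in[OF h(1)] a
        unfolding fibre_def by auto
      moreover have "\<sigma> ! j = b" using const[OF h(2) Bs_Min_in[OF h(2)]] Bs_Min_in[OF h(2)] b
        unfolding fibre_def by auto
      ultimately have "Bs ! i = Bs ! j" using eq a b by simp
      then show False using Bs_disj[OF h] Bs_ne[OF h(1)] by auto
    qed
    then show ?thesis unfolding distinct_conv_nth len by blast
  qed
  have "set w = set (pw Bs \<sigma>)" using wpw by (rule arg_cong)
  also have "\<dots> = set \<sigma>" by (rule set_pw[OF len])
  finally have ssw: "set w = set \<sigma>" .
  have s1: "set \<sigma> = {1..m}" by (subst ssw[symmetric]) (rule m)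
  have c1: "card (set \<sigma>) = k" using distinct_card[OF dist] len by simp
  have mk: "m = k" using c1 unfolding s1 by simp
  have P: "\<sigma> \<in> perms k" unfolding perms_def mem_Collect_eq using len dist s1 mk by simp
  show ?thesis using P wpw by (intro bexI[of _ \<sigma>])
qed

end



context opart begin

lemma X_Pk: "nestedX Bs \<subseteq> Pk k"
  unfolding nestedX_def Pk_def by auto

lemma X_closed:
  assumes "(a,c) \<in> nestedX Bs" "a < b" "b < c"
  shows "(a,b) \<in> nestedX Bs"
proof -
  have h: "1 \<le> a" "a < c" "c \<le> k" "Min (Bs ! (a - 1)) < Min (Bs ! (c - 1))"
    "Min (Bs ! (c - 1)) < Max (Bs ! (a - 1))" using assms(1) unfolding nestedX_def by auto
  have "Min (Bs ! (a - 1)) < Min (Bs ! (b - 1))" using Bs_min[of "a - 1" "b - 1"] h assms by auto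
  moreover have "Min (Bs ! (b - 1)) < Min (Bs ! (c - 1))" using Bs_min[of "b - 1" "c - 1"] h assms by auto
  ultimately show ?thesis unfolding nestedX_def using h assms by auto
qed

lemma Min_le_Max_B: "i < k \<Longrightarrow> Min (Bs ! i) \<le> Max (Bs ! i)"
proof -
  assume i: "i < k"
  have "Max (Bs ! i) \<in> Bs ! i" using Bs_Max_in[OF i] .
  then show ?thesis using Min_le[OF Bs_fin[OF i]] Max_ge[OF Bs_fin[OF i]] Bs_Min_in[OF i] by (meson order_trans)
qed

lemma iInv_card:
  assumes P: "\<sigma> \<in> perms k"
  shows "card (iInv (pw Bs \<sigma>)) = card (perm_Inv \<sigma> - nestedX Bs)"
proof -
  let ?D = "perm_Inv \<sigma> - nestedX Bs"
  define g where "g x = (\<sigma> ! (snd x - 1), \<sigma> ! (fst x - 1))" for x :: "nat \<times> nat"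
  have len: "length \<sigma> = k" using P unfolding perms_def by auto
  have PI: "perm_Inv \<sigma> = {(i,j). 1 \<le> i \<and> i < j \<and> j \<le> k \<and> \<sigma> ! (i - 1) > \<sigma> ! (j - 1)}"
    by (rule perm_Inv_perms[OF P])
  have inj: "inj_on g ?D"
  proof (rule inj_onI)
    fix x y assume x: "x \<in> ?D" and y: "y \<in> ?D" and e: "g x = g y"
    obtain x1 x2 where xx: "x = (x1,x2)" by (cases x)
    obtain y1 y2 where yy: "y = (y1,y2)" by (cases y)
    have r: "1 \<le> x1" "x1 < x2" "x2 \<le> k" "1 \<le> y1" "y1 < y2" "y2 \<le> k" using x y unfolding xx yy PI by auto
    have "\<sigma> ! (x2 - 1) = \<sigma> ! (y2 - 1)" "\<sigma> ! (x1 - 1) = \<sigma> ! (y1 - 1)" using e unfolding g_def xx yy by auto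
    then have "x2 = y2" "x1 = y1" using perms_sv_inj[OF P] r by (metis le_trans less_imp_le_nat linorder_not_le not_less_eq_eq)+
    then show "x = y" unfolding xx yy by simp
  qed
  have img: "g ` ?D = iInv (pw Bs \<sigma>)"
  proof
    show "g ` ?D \<subseteq> iInv (pw Bs \<sigma>)"
    proof
      fix y assume "y \<in> g ` ?D"
      then obtain j i where ji: "(j,i) \<in> ?D" "y = (\<sigma> ! (i - 1), \<sigma> ! (j - 1))" unfolding g_def by auto
      have r: "1 \<le> j" "j < i" "i \<le> k" "\<sigma> ! (j - 1) > \<sigma> ! (i - 1)" using ji(1) unfolding PI by auto
      have nn: "\<not> (Min (Bs ! (j - 1)) < Min (Bs ! (i - 1)) \<and> Min (Bs ! (i - 1)) < Max (Bs ! (j - 1)))"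
        using ji(1) r unfolding nestedX_def by auto
      have m: "Min (Bs ! (j - 1)) < Min (Bs ! (i - 1))" using Bs_min[of "j - 1" "i - 1"] r by auto
      have ik: "i - 1 < k" "j - 1 < k" using r by auto
      have ij1: "i - 1 \<noteq> j - 1" using r by auto
      have ne: "Min (Bs ! (i - 1)) \<noteq> Max (Bs ! (j - 1))"
        using Bs_disj[OF ik ij1] Bs_Min_in[OF ik(1)] Bs_Max_in[OF ik(2)] by auto
      have gt: "Min (Bs ! (i - 1)) > Max (Bs ! (j - 1))" using nn m ne by auto
      have f1: "fibre (pw Bs \<sigma>) (\<sigma> ! (i - 1)) = Bs ! (i - 1)" using fibre_pw[OF P ik(1)] .
      have f2: "fibre (pw Bs \<sigma>) (\<sigma> ! (j - 1)) = Bs ! (j - 1)" using fibre_pw[OF P ik(2)] .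
      have s: "\<sigma> ! (i - 1) \<in> set (pw Bs \<sigma>)" "\<sigma> ! (j - 1) \<in> set (pw Bs \<sigma>)"
        unfolding set_pw[OF len] using ik len by auto
      show "y \<in> iInv (pw Bs \<sigma>)" unfolding iInv_def ji(2) using s r f1 f2 gt by simp
    qed
    show "iInv (pw Bs \<sigma>) \<subseteq> g ` ?D"
    proof
      fix y assume y: "y \<in> iInv (pw Bs \<sigma>)"
      obtain a b where ab: "y = (a,b)" by (cases y)
      have h: "a \<in> set \<sigma>" "b \<in> set \<sigma>" "a < b" "Min (fibre (pw Bs \<sigma>) a) > Max (fibre (pw Bs \<sigma>) b)"
        using y unfolding ab iInv_def set_pw[OF len] by auto
      obtain i0 where i0: "i0 < k" "\<sigma> ! i0 = a" using h(1) len by (auto simp: in_set_conv_nth)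
      obtain j0 where j0: "j0 < k" "\<sigma> ! j0 = b" using h(2) len by (auto simp: in_set_conv_nth)
      have gt: "Min (Bs ! i0) > Max (Bs ! j0)" using h(4) fibre_pw[OF P i0(1)] fibre_pw[OF P j0(1)] i0 j0 by simp
      then have "Min (Bs ! i0) > Min (Bs ! j0)" using Min_le_Max_B[OF j0(1)] by linarith
      then have lt: "j0 < i0" using Bs_min_inj i0 j0 by blast
      have "(Suc j0, Suc i0) \<in> ?D"
        unfolding PI nestedX_def using lt i0 j0 h(3) gt by auto
      moreover have "g (Suc j0, Suc i0) = y" unfolding g_def ab using i0 j0 by simp
      ultimately show "y \<in> g ` ?D" by (metis image_eqI)
    qed
  qed
  show ?thesis using card_image[OF inj] img by simp
qed

lemma finite_Inv: "\<sigma> \<in> perms k \<Longrightarrow> finite (perm_Inv \<sigma>)"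
proof -
  assume P: "\<sigma> \<in> perms k"
  have "perm_Inv \<sigma> \<subseteq> {1..k} \<times> {1..k}" unfolding perm_Inv_perms[OF P] by auto
  then show ?thesis using finite_subset by blast
qed

lemma cover_exists:
  assumes P: "\<sigma> \<in> perms k" and ij: "1 \<le> i" "i < j" "j \<le> k" "\<sigma> ! (i - 1) = Suc (\<sigma> ! (j - 1))"
    and nX: "(i,j) \<notin> nestedX Bs"
  shows "pcover n (pw Bs (map (sw (\<sigma> ! (j - 1))) \<sigma>)) (pw Bs \<sigma>) \<and> map (sw (\<sigma> ! (j - 1))) \<sigma> \<in> perms k
     \<and> perm_Inv (map (sw (\<sigma> ! (j - 1))) \<sigma>) = perm_Inv \<sigma> - {(i,j)}"
proof -
  let ?a = "\<sigma> ! (j - 1)"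
  let ?\<sigma>' = "map (sw ?a) \<sigma>"
  have S: "?\<sigma>' \<in> perms k \<and> perm_Inv ?\<sigma>' = perm_Inv \<sigma> - {(i,j)}"
    using swap_Inv[OF P ij(1-3) ij(4)] by simp
  have len: "length \<sigma> = k" using P unfolding perms_def by auto
  have inI: "(i,j) \<in> perm_Inv \<sigma>" unfolding perm_Inv_perms[OF P] using ij by auto
  have e: "perm_Inv ?\<sigma>' - nestedX Bs = (perm_Inv \<sigma> - nestedX Bs) - {(i,j)}" using S by auto
  have fin: "finite (perm_Inv \<sigma> - nestedX Bs)" using finite_Inv[OF P] by auto
  have mem: "(i,j) \<in> perm_Inv \<sigma> - nestedX Bs" using inI nX by simp
  have "card (perm_Inv \<sigma> - nestedX Bs) > 0" using fin mem card_gt_0_iff by blast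
  moreover have "card ((perm_Inv \<sigma> - nestedX Bs) - {(i,j)}) = card (perm_Inv \<sigma> - nestedX Bs) - 1"
    by (rule card_Diff_singleton[OF mem])
  ultimately have "card (perm_Inv \<sigma> - nestedX Bs) = card (perm_Inv ?\<sigma>' - nestedX Bs) + 1"
    unfolding e by linarith
  then have c: "card (iInv (pw Bs \<sigma>)) = card (iInv (pw Bs ?\<sigma>')) + 1"
    using iInv_card[OF P] iInv_card[of ?\<sigma>'] S by simp
  have "pcover n (pw Bs ?\<sigma>') (pw Bs \<sigma>)"
    unfolding pcover_def using pw_PW[OF P] pw_PW[of ?\<sigma>'] S T_pw[OF len] c by metis
  then show ?thesis using S by simp
qed

end



context opart begin

lemma pcover_C:
  assumes w: "w \<in> PW n" "setpar w = set Bs" and pc: "pcover n u w"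
  shows "u \<in> PW n \<and> setpar u = set Bs \<and> (\<exists>p \<in> Inv w - nestedX Bs. Inv u = Inv w - {p})"
proof -
  obtain \<sigma> where P: "\<sigma> \<in> perms k" and wpw: "w = pw Bs \<sigma>" using C_pw[OF w] by blast
  have len: "length \<sigma> = k" using P unfolding perms_def by auto
  obtain a where uT: "u = T a w" and c: "card (iInv w) = card (iInv u) + 1" and uPW: "u \<in> PW n"
    using pc unfolding pcover_def by blast
  let ?\<sigma>' = "map (sw a) \<sigma>"
  have upw: "u = pw Bs ?\<sigma>'" using uT wpw T_pw[OF len] by simp
  have len': "length ?\<sigma>' = k" using len by simp
  have setu: "set u = sw a ` {1..k}" using upw set_pw[OF len'] P unfolding perms_def by simp
  obtain m where m: "set u = {1..m}" using uPW unfolding PW_def packed_def by auto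
  have "card (sw a ` {1..k}) = k" using card_image[OF inj_on_subset[OF inj_sw]] by simp
  then have mk: "m = k" using setu m by (metis card_atLeastAtMost diff_Suc_1)
  have sets: "set ?\<sigma>' = {1..k}" using setu m mk upw set_pw[OF len'] by simp
  have "inj_on (sw a) (set \<sigma>)" using inj_sw inj_on_subset by blast
  then have P': "?\<sigma>' \<in> perms k" unfolding perms_def using sets len' P unfolding perms_def
    by (simp add: distinct_map)
  have ne: "?\<sigma>' \<noteq> \<sigma>"
  proof
    assume "?\<sigma>' = \<sigma>" then have "u = w" using upw wpw by simp
    then show False using c by simp
  qed
  have "\<exists>q<k. sw a (\<sigma> ! q) \<noteq> \<sigma> ! q"
  proof (rule ccontr)
    assume "\<not> (\<exists>q<k. sw a (\<sigma> ! q) \<noteq> \<sigma> ! q)"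
    then have "\<forall>q<k. sw a (\<sigma> ! q) = \<sigma> ! q" by simp
    then have "?\<sigma>' = \<sigma>" using len by (intro nth_equalityI) auto
    then show False using ne by simp
  qed
  then obtain q where q: "q < k" "sw a (\<sigma> ! q) \<noteq> \<sigma> ! q" by blast
  have "\<sigma> ! q \<in> set \<sigma>" using q(1) len by simp
  then have sq: "\<sigma> ! q \<in> {1..k}" using P unfolding perms_def by simp
  have "?\<sigma>' ! q \<in> set ?\<sigma>'" by (rule nth_mem) (simp add: q(1) len)
  note m1 = this[unfolded sets]
  have sq': "sw a (\<sigma> ! q) \<in> {1..k}" using m1 q(1) len by simp
  have aa: "a \<in> {1..k}" "Suc a \<in> {1..k}" using q(2) sq sq' unfolding sw_def by (auto split: if_splits)
  obtain i0 where i0: "1 \<le> i0" "i0 \<le> k" "\<sigma> ! (i0 - 1) = Suc a" using perms_sv_surj[OF P aa(2)] by blast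
  obtain j0 where j0: "1 \<le> j0" "j0 \<le> k" "\<sigma> ! (j0 - 1) = a" using perms_sv_surj[OF P aa(1)] by blast
  have ij: "i0 \<noteq> j0" using i0 j0 by auto
  have cc: "card (perm_Inv \<sigma> - nestedX Bs) = card (perm_Inv ?\<sigma>' - nestedX Bs) + 1"
    using c iInv_card[OF P] iInv_card[OF P'] upw wpw by simp
  have IU: "Inv u = perm_Inv ?\<sigma>'" using Inv_pw[OF P'] upw by simp
  have IW: "Inv w = perm_Inv \<sigma>" using Inv_pw[OF P] wpw by simp
  have spU: "setpar u = set Bs" using setpar_pw[OF P'] upw by simp
  show ?thesis
  proof (cases "i0 < j0")
    case True
    have S: "perm_Inv ?\<sigma>' = perm_Inv \<sigma> - {(i0,j0)}" using swap_Inv[OF P i0(1) True j0(2) i0(3) j0(3)] by simp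
    have inI: "(i0,j0) \<in> perm_Inv \<sigma>" unfolding perm_Inv_perms[OF P] using i0 j0 True by auto
    have nX: "(i0,j0) \<notin> nestedX Bs"
    proof
      assume "(i0,j0) \<in> nestedX Bs"
      then have "perm_Inv ?\<sigma>' - nestedX Bs = perm_Inv \<sigma> - nestedX Bs" using S by auto
      then show False using cc by simp
    qed
    show ?thesis using uPW spU IU IW S inI nX by blast
  next
    case False
    then have lt: "j0 < i0" using ij by simp
    have a1: "?\<sigma>' ! (j0 - 1) = Suc a" using j0 len unfolding sw_def by simp
    have a2: "?\<sigma>' ! (i0 - 1) = a" using i0 len unfolding sw_def by simp
    have S: "perm_Inv (map (sw a) ?\<sigma>') = perm_Inv ?\<sigma>' - {(j0,i0)}"
      using swap_Inv[OF P' j0(1) lt i0(2) a1 a2] by simp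
    have "map (sw a) ?\<sigma>' = \<sigma>" by (simp add: comp_def)
    then have sub: "perm_Inv \<sigma> - nestedX Bs \<subseteq> perm_Inv ?\<sigma>' - nestedX Bs" using S by auto
    have "card (perm_Inv \<sigma> - nestedX Bs) \<le> card (perm_Inv ?\<sigma>' - nestedX Bs)"
      using card_mono[OF _ sub] finite_Inv[OF P'] by simp
    then show ?thesis using cc by simp
  qed
qed

definition C :: "nat list set" where "C = {w \<in> PW n. setpar w = set Bs}"

lemma C_rep: "w \<in> C \<Longrightarrow> delrpt w \<in> perms k \<and> w = pw Bs (delrpt w)"
  unfolding C_def using C_pw delrpt_pw by fastforce

lemma pw_C: "\<sigma> \<in> perms k \<Longrightarrow> pw Bs \<sigma> \<in> C"
  unfolding C_def using pw_PW setpar_pw by simp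

lemma tranclp_C:
  assumes "(pcover n)\<^sup>+\<^sup>+ u w" "w \<in> C"
  shows "u \<in> C \<and> Inv u \<subseteq> Inv w \<and> Inv u \<inter> nestedX Bs = Inv w \<inter> nestedX Bs"
  using assms
proof (induction rule: tranclp_induct)
  case (base y)
  then show ?case using pcover_C[of y u] unfolding C_def by auto
next
  case (step y z)
  have y: "y \<in> C \<and> Inv y \<subseteq> Inv z \<and> Inv y \<inter> nestedX Bs = Inv z \<inter> nestedX Bs"
    using pcover_C[of z y] step(2,4) unfolding C_def by auto
  then show ?case using step(3) by blast
qed

lemma le_imp:
  assumes "pwo_le n u w" "w \<in> C"
  shows "u \<in> C \<and> Inv u \<subseteq> Inv w \<and> Inv u \<inter> nestedX Bs = Inv w \<inter> nestedX Bs"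
  using assms tranclp_C unfolding pwo_le_def by blast

lemma C_setpar_tranclp:
  assumes "(pcover n)\<^sup>+\<^sup>+ u w" "u \<in> C"
  shows "w \<in> C"
  using tranclp_pcover[OF assms(1)] assms(2) unfolding C_def by simp

lemma imp_le_aux:
  "\<forall>u w. u \<in> C \<and> w \<in> C \<and> Inv u \<subseteq> Inv w \<and> Inv u \<inter> nestedX Bs = Inv w \<inter> nestedX Bs
     \<and> card (Inv w - Inv u) = d \<longrightarrow> pwo_le n u w"
proof (induction d rule: less_induct)
  case (less d)
  show ?case
  proof (intro allI impI, elim conjE)
    fix u w assume u: "u \<in> C" and w: "w \<in> C" and sub: "Inv u \<subseteq> Inv w"
      and X: "Inv u \<inter> nestedX Bs = Inv w \<inter> nestedX Bs" and d: "card (Inv w - Inv u) = d"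
    define \<sigma> where "\<sigma> = delrpt u"
    define \<tau> where "\<tau> = delrpt w"
    have P: "\<sigma> \<in> perms k" "u = pw Bs \<sigma>" using C_rep[OF u] unfolding \<sigma>_def by auto
    have Q: "\<tau> \<in> perms k" "w = pw Bs \<tau>" using C_rep[OF w] unfolding \<tau>_def by auto
    have Iu: "Inv u = perm_Inv \<sigma>" unfolding \<sigma>_def Inv_def ..
    have Iw: "Inv w = perm_Inv \<tau>" unfolding \<tau>_def Inv_def ..
    show "pwo_le n u w"
    proof (cases "perm_Inv \<sigma> = perm_Inv \<tau>")
      case True
      then have "\<sigma> = \<tau>" using perm_Inv_inj P(1) Q(1) by blast
      then have "u = w" using P Q by simp
      then show ?thesis unfolding pwo_le_def using u unfolding C_def by simp
    next
      case False
      obtain i j where ij: "(i,j) \<in> perm_Inv \<tau> - perm_Inv \<sigma>" "\<tau> ! (i - 1) = Suc (\<tau> ! (j - 1))"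
        using descent[OF P(1) Q(1) _ False] sub Iu Iw by auto
      have r: "1 \<le> i" "i < j" "j \<le> k" using ij(1) unfolding perm_Inv_perms[OF Q(1)] by auto
      have nX: "(i,j) \<notin> nestedX Bs" using ij(1) X Iu Iw by blast
      let ?\<tau>' = "map (sw (\<tau> ! (j - 1))) \<tau>"
      have ce: "pcover n (pw Bs ?\<tau>') (pw Bs \<tau>)" "?\<tau>' \<in> perms k" "perm_Inv ?\<tau>' = perm_Inv \<tau> - {(i,j)}"
        using cover_exists[OF Q(1) r ij(2) nX] by auto
      let ?w' = "pw Bs ?\<tau>'"
      have w': "?w' \<in> C" using pw_C[OF ce(2)] .
      have Iw': "Inv ?w' = perm_Inv \<tau> - {(i,j)}" using Inv_pw[OF ce(2)] ce(3) by simp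
      have sub': "Inv u \<subseteq> Inv ?w'" using Iw' sub Iu Iw ij(1) by auto
      have X': "Inv u \<inter> nestedX Bs = Inv ?w' \<inter> nestedX Bs" using Iw' X Iw nX by auto
      have fin: "finite (Inv w - Inv u)" using finite_Inv[OF Q(1)] Iw by simp
      have e1: "Inv ?w' - Inv u = (Inv w - Inv u) - {(i,j)}" using Iw' Iw by auto
      have mem: "(i,j) \<in> Inv w - Inv u" using ij(1) Iu Iw by simp
      have "card ((Inv w - Inv u) - {(i,j)}) < card (Inv w - Inv u)" by (rule card_Diff1_less[OF fin mem])
      then have "card (Inv ?w' - Inv u) < d" unfolding e1 d .
      then have le: "pwo_le n u ?w'" using less w' u sub' X' by blast
      have "(pcover n)\<^sup>+\<^sup>+ u w"
      proof (cases "u = ?w'")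
        case True then show ?thesis using ce(1) Q(2) by auto
      next
        case False
        then have "(pcover n)\<^sup>+\<^sup>+ u ?w'" using le unfolding pwo_le_def by auto
        then show ?thesis using ce(1) Q(2) by (metis tranclp.trancl_into_trancl)
      qed
      then show ?thesis unfolding pwo_le_def by simp
    qed
  qed
qed

lemma imp_le:
  assumes "u \<in> C" "w \<in> C" "Inv u \<subseteq> Inv w" "Inv u \<inter> nestedX Bs = Inv w \<inter> nestedX Bs"
  shows "pwo_le n u w"
  using imp_le_aux assms by blast

end



context opart begin

lemma WA_char:
  assumes "A \<subseteq> nestedX Bs"
  shows "w \<in> WA n Bs A \<longleftrightarrow> w \<in> C \<and> Inv w \<inter> nestedX Bs = A"
  unfolding WA_def C_def using assms by blast

lemma WA_rep:
  assumes "A \<subseteq> nestedX Bs" "w \<in> WA n Bs A"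
  shows "delrpt w \<in> perms k \<and> w = pw Bs (delrpt w) \<and> perm_Inv (delrpt w) \<inter> nestedX Bs = A"
  using WA_char[OF assms(1)] assms(2) C_rep unfolding Inv_def by blast

lemma pw_WA:
  assumes "A \<subseteq> nestedX Bs" "\<rho> \<in> perms k" "perm_Inv \<rho> \<inter> nestedX Bs = A"
  shows "pw Bs \<rho> \<in> WA n Bs A"
  using WA_char[OF assms(1)] pw_C[OF assms(2)] Inv_pw[OF assms(2)] assms(3) by simp

lemma trans_Inv: "\<sigma> \<in> perms k \<Longrightarrow> trans (perm_Inv \<sigma>)"
  using isinv_perm_Inv unfolding isinv_def by blast

lemma sub_Inv: "\<sigma> \<in> perms k \<Longrightarrow> perm_Inv \<sigma> \<subseteq> Pk k"
  using isinv_perm_Inv unfolding isinv_def by blast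

lemma join_W:
  assumes A: "A \<subseteq> nestedX Bs" and u: "u \<in> WA n Bs A" and v: "v \<in> WA n Bs A"
  shows "perm_join (delrpt u) (delrpt v) \<in> perms k \<and>
    perm_Inv (perm_join (delrpt u) (delrpt v)) = (perm_Inv (delrpt u) \<union> perm_Inv (delrpt v))\<^sup>+ \<and>
    pw Bs (perm_join (delrpt u) (delrpt v)) \<in> WA n Bs A"
proof -
  have ru: "delrpt u \<in> perms k" "perm_Inv (delrpt u) \<inter> nestedX Bs = A" using WA_rep[OF A u] by auto
  have rv: "delrpt v \<in> perms k" "perm_Inv (delrpt v) \<inter> nestedX Bs = A" using WA_rep[OF A v] by auto
  let ?I = "perm_Inv (delrpt u)" and ?J = "perm_Inv (delrpt v)"
  have J: "perm_join (delrpt u) (delrpt v) \<in> perms k"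
    "perm_Inv (perm_join (delrpt u) (delrpt v)) = (?I \<union> ?J)\<^sup>+"
    using perm_join_char[OF ru(1) rv(1)] by auto
  have "(?I \<union> ?J)\<^sup>+ \<inter> nestedX Bs \<subseteq> ?I"
    using tc_X[of ?I k ?J "nestedX Bs"] sub_Inv trans_Inv ru rv X_closed by auto
  moreover have "?I \<inter> nestedX Bs \<subseteq> (?I \<union> ?J)\<^sup>+ \<inter> nestedX Bs" by auto
  ultimately have "(?I \<union> ?J)\<^sup>+ \<inter> nestedX Bs = A" using ru by auto
  then show ?thesis using J pw_WA[OF A J(1)] by simp
qed

lemma meet_W:
  assumes A: "A \<subseteq> nestedX Bs" and u: "u \<in> WA n Bs A" and v: "v \<in> WA n Bs A"
  shows "perm_meet (delrpt u) (delrpt v) \<in> perms k \<and>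
    perm_Inv (perm_meet (delrpt u) (delrpt v)) = Pk k - ((Pk k - perm_Inv (delrpt u)) \<union> (Pk k - perm_Inv (delrpt v)))\<^sup>+ \<and>
    pw Bs (perm_meet (delrpt u) (delrpt v)) \<in> WA n Bs A"
proof -
  have ru: "delrpt u \<in> perms k" "perm_Inv (delrpt u) \<inter> nestedX Bs = A" using WA_rep[OF A u] by auto
  have rv: "delrpt v \<in> perms k" "perm_Inv (delrpt v) \<inter> nestedX Bs = A" using WA_rep[OF A v] by auto
  let ?I = "Pk k - perm_Inv (delrpt u)" and ?J = "Pk k - perm_Inv (delrpt v)"
  have M: "perm_meet (delrpt u) (delrpt v) \<in> perms k"
    "perm_Inv (perm_meet (delrpt u) (delrpt v)) = Pk k - (?I \<union> ?J)\<^sup>+"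
    using perm_meet_char[OF ru(1) rv(1)] by auto
  have iI: "isinv k ?I" "isinv k ?J" using isinv_compl isinv_perm_Inv ru(1) rv(1) by auto
  have XP: "nestedX Bs \<subseteq> Pk k" by (rule X_Pk)
  have "?I \<inter> nestedX Bs = ?J \<inter> nestedX Bs" using ru(2) rv(2) XP by blast
  then have tc: "(?I \<union> ?J)\<^sup>+ \<inter> nestedX Bs \<subseteq> ?I"
    using tc_X[of ?I k ?J "nestedX Bs"] iI X_closed unfolding isinv_def by auto
  have "(Pk k - (?I \<union> ?J)\<^sup>+) \<inter> nestedX Bs = A"
  proof
    show "(Pk k - (?I \<union> ?J)\<^sup>+) \<inter> nestedX Bs \<subseteq> A" using ru(2) by auto
    show "A \<subseteq> (Pk k - (?I \<union> ?J)\<^sup>+) \<inter> nestedX Bs" using ru(2) tc XP by blast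
  qed
  then show ?thesis using M pw_WA[OF A M(1)] by simp
qed

lemma iso_W:
  assumes A: "A \<subseteq> nestedX Bs" and u: "u \<in> WA n Bs A" and v: "v \<in> WA n Bs A"
  shows "pwo_le n u v \<longleftrightarrow> perm_le (delrpt u) (delrpt v)"
proof -
  have cu: "u \<in> C" "Inv u \<inter> nestedX Bs = A" using WA_char[OF A] u by auto
  have cv: "v \<in> C" "Inv v \<inter> nestedX Bs = A" using WA_char[OF A] v by auto
  show ?thesis
  proof
    assume "pwo_le n u v" then show "perm_le (delrpt u) (delrpt v)"
      using le_imp[OF _ cv(1)] unfolding perm_le_def Inv_def by blast
  next
    assume "perm_le (delrpt u) (delrpt v)"
    then have "Inv u \<subseteq> Inv v" unfolding perm_le_def Inv_def .
    then show "pwo_le n u v" using imp_le[OF cu(1) cv(1)] cu(2) cv(2) by simp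
  qed
qed

lemma pwo_le_PW: "pwo_le n u w \<Longrightarrow> u \<in> PW n \<and> w \<in> PW n"
  unfolding pwo_le_def using tranclp_pcover by blast

lemma comp_W:
  assumes A: "A \<subseteq> nestedX Bs" and u: "u \<in> WA n Bs A"
  shows "{v \<in> PW n. pconn n u v} = WA n Bs A"
proof
  show "{v \<in> PW n. pconn n u v} \<subseteq> WA n Bs A"
  proof -
    have "pconn n u v \<Longrightarrow> v \<in> WA n Bs A" for v
      unfolding pconn_def
    proof (induction rule: rtranclp_induct)
      case base then show ?case using u .
    next
      case (step y z)
      have y: "y \<in> C" "Inv y \<inter> nestedX Bs = A" using WA_char[OF A] step(3) by auto
      from step(2) show ?case
      proof
        assume "hasse n y z"
        then have t: "(pcover n)\<^sup>+\<^sup>+ y z" by (rule hasse_tranclp)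
        then have zC: "z \<in> C" using C_setpar_tranclp y(1) by blast
        then have "Inv y \<inter> nestedX Bs = Inv z \<inter> nestedX Bs" using tranclp_C[OF t] by blast
        then show "z \<in> WA n Bs A" using WA_char[OF A] zC y by simp
      next
        assume "hasse n z y"
        then have t: "(pcover n)\<^sup>+\<^sup>+ z y" by (rule hasse_tranclp)
        then have "z \<in> C \<and> Inv z \<inter> nestedX Bs = Inv y \<inter> nestedX Bs" using tranclp_C[OF t y(1)] by blast
        then show "z \<in> WA n Bs A" using WA_char[OF A] y by simp
      qed
    qed
    then show ?thesis by blast
  qed
  show "WA n Bs A \<subseteq> {v \<in> PW n. pconn n u v}"
  proof
    fix v assume v: "v \<in> WA n Bs A"
    let ?m = "pw Bs (perm_meet (delrpt u) (delrpt v))"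
    have M: "perm_meet (delrpt u) (delrpt v) \<in> perms k" "?m \<in> WA n Bs A"
      "perm_Inv (perm_meet (delrpt u) (delrpt v)) = Pk k - ((Pk k - perm_Inv (delrpt u)) \<union> (Pk k - perm_Inv (delrpt v)))\<^sup>+"
      using meet_W[OF A u v] by auto
    have dm: "delrpt ?m = perm_meet (delrpt u) (delrpt v)" using delrpt_pw[OF M(1)] .
    have "perm_le (delrpt ?m) (delrpt u)" "perm_le (delrpt ?m) (delrpt v)"
      unfolding dm perm_le_def M(3) by auto
    then have "pwo_le n ?m u" "pwo_le n ?m v" using iso_W[OF A M(2)] u v by auto
    then have "pconn n ?m u" "pconn n ?m v" using pwo_le_pconn by auto
    then have "pconn n u v" using pconn_sym pconn_trans by blast
    moreover have "v \<in> PW n" using v unfolding WA_def by auto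
    ultimately show "v \<in> {v \<in> PW n. pconn n u v}" by simp
  qed
qed

end



lemma fibre_sub: "fibre u a \<subseteq> {1..length u}" unfolding fibre_def by auto

lemma fibre_ne: "a \<in> set u \<Longrightarrow> fibre u a \<noteq> {}"
proof -
  assume "a \<in> set u"
  then obtain q where "q < length u" "u ! q = a" by (auto simp: in_set_conv_nth)
  then have "Suc q \<in> fibre u a" unfolding fibre_def by auto
  then show ?thesis by auto
qed

lemma fibre_fin: "finite (fibre u a)" using fibre_sub finite_subset by blast

lemma exists_op:
  assumes "u \<in> PW n"
  shows "\<exists>Bs. ordered_partition n Bs \<and> set Bs = setpar u"
proof -
  have lu: "length u = n" using assms unfolding PW_def by auto
  define M where "M = {Min (fibre u a) | a. a \<in> set u}"
  have finM: "finite M" unfolding M_def by simp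
  define f where "f = sorted_list_of_set M"
  define g where "g b = fibre u (u ! (b - 1))" for b
  have sf: "set f = M" unfolding f_def using finM by simp
  have srt: "sorted_wrt (<) f" unfolding f_def by simp
  have df: "distinct f" unfolding f_def by simp
  have gM: "g b = fibre u a \<and> Min (g b) = b" if "a \<in> set u" "b = Min (fibre u a)" for a b
  proof -
    have "b \<in> fibre u a" using Min_in[OF fibre_fin fibre_ne[OF that(1)]] that(2) by simp
    then have "u ! (b - 1) = a" unfolding fibre_def by simp
    then show ?thesis unfolding g_def using that(2) by simp
  qed
  define Bs where "Bs = map g f"
  have Bsi: "\<exists>a \<in> set u. Bs ! i = fibre u a \<and> Min (Bs ! i) = f ! i" if "i < length Bs" for i
  proof -
    have "f ! i \<in> M" using that sf unfolding Bs_def by (metis length_map nth_mem)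
    then obtain a where a: "a \<in> set u" "f ! i = Min (fibre u a)" unfolding M_def by blast
    have "Bs ! i = g (f ! i)" using that unfolding Bs_def by simp
    then show ?thesis using gM[OF a] a by auto
  qed
  have op: "ordered_partition n Bs"
    unfolding ordered_partition_def
  proof (intro conjI allI impI)
    show "\<forall>B\<in>set Bs. B \<noteq> {}"
      using Bsi fibre_ne by (metis in_set_conv_nth)
    show "\<Union> (set Bs) = {1..n}"
    proof
      show "\<Union> (set Bs) \<subseteq> {1..n}" using Bsi fibre_sub lu by (metis Union_least in_set_conv_nth)
      show "{1..n} \<subseteq> \<Union> (set Bs)"
      proof
        fix p assume p: "p \<in> {1..n}"
        let ?a = "u ! (p - 1)"
        have a: "?a \<in> set u" using p lu by auto
        have pf: "p \<in> fibre u ?a" using p lu unfolding fibre_def by auto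
        have "Min (fibre u ?a) \<in> M" unfolding M_def using a by blast
        then obtain i where i: "i < length f" "f ! i = Min (fibre u ?a)" using sf by (metis in_set_conv_nth)
        have "Bs ! i = fibre u ?a" using gM[OF a i(2)] i unfolding Bs_def by simp
        moreover have "Bs ! i \<in> set Bs" using i unfolding Bs_def by (metis length_map nth_mem)
        ultimately show "p \<in> \<Union> (set Bs)" using pf by blast
      qed
    qed
    fix i j
    show "Bs ! i \<inter> Bs ! j = {}" if h: "i < length Bs \<and> j < length Bs \<and> i \<noteq> j"
    proof -
      obtain a where a: "a \<in> set u" "Bs ! i = fibre u a" "Min (Bs ! i) = f ! i" using Bsi h by blast
      obtain b where b: "b \<in> set u" "Bs ! j = fibre u b" "Min (Bs ! j) = f ! j" using Bsi h by blast
      have "f ! i \<noteq> f ! j" using df h unfolding Bs_def by (simp add: nth_eq_iff_index_eq)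
      then have "a \<noteq> b" using a b by auto
      then show ?thesis using a b unfolding fibre_def by auto
    qed
    show "Min (Bs ! i) < Min (Bs ! j)" if h: "i < j \<and> j < length Bs"
    proof -
      have "f ! i < f ! j" using srt h unfolding Bs_def by (simp add: sorted_wrt_iff_nth_less)
      then show ?thesis using Bsi h by (metis order.strict_trans)
    qed
  qed
  have "set Bs = setpar u"
  proof
    show "set Bs \<subseteq> setpar u" unfolding setpar_def using Bsi by (fastforce simp: in_set_conv_nth)
    show "setpar u \<subseteq> set Bs"
    proof
      fix B assume "B \<in> setpar u"
      then obtain a where a: "a \<in> set u" "B = fibre u a" unfolding setpar_def by blast
      have "Min (fibre u a) \<in> set f" unfolding sf M_def using a by blast
      moreover have "g (Min (fibre u a)) = B" using gM[OF a(1) refl] a by simp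
      ultimately show "B \<in> set Bs" unfolding Bs_def by (metis image_eqI set_map)
    qed
  qed
  then show ?thesis using op by blast
qed


context opart begin

lemma meet_sub: "Pk k - ((Pk k - I) \<union> (Pk k - J))\<^sup>+ \<subseteq> I"
  by auto

lemma meet_sub2: "Pk k - ((Pk k - I) \<union> (Pk k - J))\<^sup>+ \<subseteq> J"
  by auto

lemma meet_greatest:
  assumes "z \<in> perms k" "perm_Inv z \<subseteq> I" "perm_Inv z \<subseteq> J"
  shows "perm_Inv z \<subseteq> Pk k - ((Pk k - I) \<union> (Pk k - J))\<^sup>+"
proof -
  have i: "isinv k (Pk k - perm_Inv z)" using isinv_compl isinv_perm_Inv assms(1) by blast
  have "(Pk k - I) \<union> (Pk k - J) \<subseteq> Pk k - perm_Inv z" using assms by blast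
  then have "((Pk k - I) \<union> (Pk k - J))\<^sup>+ \<subseteq> Pk k - perm_Inv z" using trancl_sub i unfolding isinv_def by blast
  then show ?thesis using sub_Inv[OF assms(1)] by blast
qed

lemma join_least:
  assumes "z \<in> perms k" "I \<subseteq> perm_Inv z" "J \<subseteq> perm_Inv z"
  shows "(I \<union> J)\<^sup>+ \<subseteq> perm_Inv z"
  using trancl_sub[of "I \<union> J" "perm_Inv z"] trans_Inv[OF assms(1)] assms(2,3) by blast

lemma part1:
  assumes A: "A \<subseteq> nestedX Bs" and ne: "WA n Bs A \<noteq> {}"
  shows "is_component n (WA n Bs A) \<and>
              (\<exists>bot\<in>WA n Bs A. \<exists>top\<in>WA n Bs A. \<forall>x\<in>WA n Bs A. pwo_le n bot x \<and> pwo_le n x top) \<and>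
              (\<forall>u\<in>WA n Bs A. \<forall>w\<in>WA n Bs A. \<exists>j m. is_lub_on (pwo_le n) (WA n Bs A) u w j \<and> is_glb_on (pwo_le n) (WA n Bs A) u w m) \<and>
              (\<exists>\<sigma>\<in>perms k. \<exists>\<tau>\<in>perms k. perm_le \<sigma> \<tau> \<and>
                 bij_betw delrpt (WA n Bs A) {\<rho> \<in> perms k. perm_le \<sigma> \<rho> \<and> perm_le \<rho> \<tau>} \<and>
                 (\<forall>u\<in>WA n Bs A. \<forall>v\<in>WA n Bs A. pwo_le n u v \<longleftrightarrow> perm_le (delrpt u) (delrpt v))) \<and>
              (\<forall>u\<in>WA n Bs A. \<forall>w\<in>WA n Bs A.
                 is_lub_on (pwo_le n) (WA n Bs A) u w (pw Bs (perm_join (delrpt u) (delrpt w))) \<and>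
                 is_glb_on (pwo_le n) (WA n Bs A) u w (pw Bs (perm_meet (delrpt u) (delrpt w))))"
proof -
  let ?W = "WA n Bs A"
  obtain u0 where u0: "u0 \<in> ?W" using ne by blast
  have comp: "is_component n ?W"
    unfolding is_component_def using comp_W[OF A u0] u0 unfolding WA_def by blast
  have iso: "\<forall>u\<in>?W. \<forall>v\<in>?W. pwo_le n u v \<longleftrightarrow> perm_le (delrpt u) (delrpt v)"
    using iso_W[OF A] by blast
  have lub: "is_lub_on (pwo_le n) ?W u w (pw Bs (perm_join (delrpt u) (delrpt w)))"
    if u: "u \<in> ?W" and w: "w \<in> ?W" for u w
  proof -
    let ?j = "perm_join (delrpt u) (delrpt w)"
    have J: "?j \<in> perms k" "perm_Inv ?j = (perm_Inv (delrpt u) \<union> perm_Inv (delrpt w))\<^sup>+"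
      "pw Bs ?j \<in> ?W" using join_W[OF A u w] by auto
    have dj: "delrpt (pw Bs ?j) = ?j" using delrpt_pw[OF J(1)] .
    have "perm_le (delrpt u) (delrpt (pw Bs ?j))" "perm_le (delrpt w) (delrpt (pw Bs ?j))"
      unfolding dj perm_le_def J(2) by auto
    then have "pwo_le n u (pw Bs ?j)" "pwo_le n w (pw Bs ?j)"
      using iso u w J(3) by auto
    moreover have "pwo_le n (pw Bs ?j) z" if z: "z \<in> ?W" "pwo_le n u z" "pwo_le n w z" for z
    proof -
      have "perm_le (delrpt u) (delrpt z)" "perm_le (delrpt w) (delrpt z)" using iso u w z by auto
      moreover have "delrpt z \<in> perms k" using WA_rep[OF A z(1)] by blast
      ultimately have "perm_le ?j (delrpt z)" unfolding perm_le_def J(2) using join_least by blast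
      then show ?thesis using iso J(3) z(1) dj by auto
    qed
    ultimately show ?thesis unfolding is_lub_on_def using J(3) by blast
  qed
  have glb: "is_glb_on (pwo_le n) ?W u w (pw Bs (perm_meet (delrpt u) (delrpt w)))"
    if u: "u \<in> ?W" and w: "w \<in> ?W" for u w
  proof -
    let ?m = "perm_meet (delrpt u) (delrpt w)"
    have M: "?m \<in> perms k" "perm_Inv ?m = Pk k - ((Pk k - perm_Inv (delrpt u)) \<union> (Pk k - perm_Inv (delrpt w)))\<^sup>+"
      "pw Bs ?m \<in> ?W" using meet_W[OF A u w] by auto
    have dm: "delrpt (pw Bs ?m) = ?m" using delrpt_pw[OF M(1)] .
    have "perm_le (delrpt (pw Bs ?m)) (delrpt u)" "perm_le (delrpt (pw Bs ?m)) (delrpt w)"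
      unfolding dm perm_le_def M(2) using meet_sub meet_sub2 by auto
    then have "pwo_le n (pw Bs ?m) u" "pwo_le n (pw Bs ?m) w"
      using iso u w M(3) by auto
    moreover have "pwo_le n z (pw Bs ?m)" if z: "z \<in> ?W" "pwo_le n z u" "pwo_le n z w" for z
    proof -
      have "perm_le (delrpt z) (delrpt u)" "perm_le (delrpt z) (delrpt w)" using iso u w z by auto
      moreover have "delrpt z \<in> perms k" using WA_rep[OF A z(1)] by blast
      ultimately have "perm_le (delrpt z) ?m" unfolding perm_le_def M(2) using meet_greatest by blast
      then show ?thesis using iso M(3) z(1) dm by auto
    qed
    ultimately show ?thesis unfolding is_glb_on_def using M(3) by blast
  qed
  have finI: "finite (Inv x)" if "x \<in> ?W" for x
    using WA_rep[OF A that] finite_Inv unfolding Inv_def by blast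
  obtain bot where bot: "bot \<in> ?W" "\<And>y. y \<in> ?W \<Longrightarrow> card (Inv bot) \<le> card (Inv y)"
    using ex_has_least_nat[of "\<lambda>x. x \<in> ?W" u0 "\<lambda>x. card (Inv x)"] u0 by blast
  obtain top where top: "top \<in> ?W" "\<And>y. y \<in> ?W \<Longrightarrow> card (Pk k) - card (Inv top) \<le> card (Pk k) - card (Inv y)"
    using ex_has_least_nat[of "\<lambda>x. x \<in> ?W" u0 "\<lambda>x. card (Pk k) - card (Inv x)"] u0 by blast
  have finPk: "finite (Pk k)" unfolding Pk_def by (rule finite_subset[of _ "{1..k} \<times> {1..k}"]) auto
  have botle: "pwo_le n bot x" if x: "x \<in> ?W" for x
  proof -
    let ?m = "perm_meet (delrpt bot) (delrpt x)"
    have M: "?m \<in> perms k" "perm_Inv ?m = Pk k - ((Pk k - perm_Inv (delrpt bot)) \<union> (Pk k - perm_Inv (delrpt x)))\<^sup>+"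
      "pw Bs ?m \<in> ?W" using meet_W[OF A bot(1) x] by auto
    have Im: "Inv (pw Bs ?m) = perm_Inv ?m" using Inv_pw[OF M(1)] .
    have s0: "perm_Inv ?m \<subseteq> perm_Inv (delrpt bot)" "perm_Inv ?m \<subseteq> perm_Inv (delrpt x)"
      unfolding M(2) by auto
    have s1: "Inv (pw Bs ?m) \<subseteq> Inv bot" "Inv (pw Bs ?m) \<subseteq> Inv x"
      using s0 Im unfolding Inv_def[of bot] Inv_def[of x] by auto
    have "card (Inv bot) \<le> card (Inv (pw Bs ?m))" using bot(2)[OF M(3)] .
    moreover have "card (Inv (pw Bs ?m)) \<le> card (Inv bot)" using card_mono[OF finI[OF bot(1)] s1(1)] .
    ultimately have eq: "Inv (pw Bs ?m) = Inv bot"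
      using card_subset_eq[OF finI[OF bot(1)] s1(1)] by linarith
    have "Inv bot \<subseteq> Inv x" using s1(2) unfolding eq .
    then have "perm_le (delrpt bot) (delrpt x)" unfolding perm_le_def Inv_def .
    then show ?thesis using iso_W[OF A bot(1) x] by simp
  qed
  have tople: "pwo_le n x top" if x: "x \<in> ?W" for x
  proof -
    let ?j = "perm_join (delrpt top) (delrpt x)"
    have J: "?j \<in> perms k" "perm_Inv ?j = (perm_Inv (delrpt top) \<union> perm_Inv (delrpt x))\<^sup>+"
      "pw Bs ?j \<in> ?W" using join_W[OF A top(1) x] by auto
    have Ij: "Inv (pw Bs ?j) = perm_Inv ?j" using Inv_pw[OF J(1)] .
    have s0: "perm_Inv (delrpt top) \<subseteq> perm_Inv ?j" "perm_Inv (delrpt x) \<subseteq> perm_Inv ?j"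
      unfolding J(2) by auto
    have s1: "Inv top \<subseteq> Inv (pw Bs ?j)" "Inv x \<subseteq> Inv (pw Bs ?j)"
      using s0 Ij unfolding Inv_def[of top] Inv_def[of x] by auto
    have sP: "Inv (pw Bs ?j) \<subseteq> Pk k" using sub_Inv[OF J(1)] Ij by simp
    have c1: "card (Inv (pw Bs ?j)) \<le> card (Pk k)" using card_mono[OF finPk sP] .
    have c2: "card (Inv top) \<le> card (Inv (pw Bs ?j))" using card_mono[OF finI[OF J(3)] s1(1)] .
    have "card (Pk k) - card (Inv top) \<le> card (Pk k) - card (Inv (pw Bs ?j))" using top(2)[OF J(3)] .
    then have "card (Inv (pw Bs ?j)) \<le> card (Inv top)" using c1 c2 by linarith
    then have eq: "Inv top = Inv (pw Bs ?j)" using card_subset_eq[OF finI[OF J(3)] s1(1)] c2 by linarith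
    have "Inv x \<subseteq> Inv top" using s1(2) unfolding eq .
    then have "perm_le (delrpt x) (delrpt top)" unfolding perm_le_def Inv_def .
    then show ?thesis using iso_W[OF A x top(1)] by simp
  qed
  have bt: "\<exists>bot\<in>?W. \<exists>top\<in>?W. \<forall>x\<in>?W. pwo_le n bot x \<and> pwo_le n x top"
    using bot(1) top(1) botle tople by blast
  let ?\<sigma> = "delrpt bot" and ?\<tau> = "delrpt top"
  have Ps: "?\<sigma> \<in> perms k" "?\<tau> \<in> perms k" using WA_rep[OF A bot(1)] WA_rep[OF A top(1)] by auto
  have st: "perm_le ?\<sigma> ?\<tau>" using iso_W[OF A bot(1) top(1)] botle[OF top(1)] by simp
  have bij: "bij_betw delrpt ?W {\<rho> \<in> perms k. perm_le ?\<sigma> \<rho> \<and> perm_le \<rho> ?\<tau>}"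
    unfolding bij_betw_def
  proof (intro conjI)
    show "inj_on delrpt ?W"
    proof (rule inj_onI)
      fix x y assume "x \<in> ?W" "y \<in> ?W" "delrpt x = delrpt y"
      then show "x = y" using WA_rep[OF A] by metis
    qed
    show "delrpt ` ?W = {\<rho> \<in> perms k. perm_le ?\<sigma> \<rho> \<and> perm_le \<rho> ?\<tau>}"
    proof
      show "delrpt ` ?W \<subseteq> {\<rho> \<in> perms k. perm_le ?\<sigma> \<rho> \<and> perm_le \<rho> ?\<tau>}"
        using WA_rep[OF A] iso bot(1) top(1) botle tople by blast
      show "{\<rho> \<in> perms k. perm_le ?\<sigma> \<rho> \<and> perm_le \<rho> ?\<tau>} \<subseteq> delrpt ` ?W"
      proof
        fix \<rho> assume r: "\<rho> \<in> {\<rho> \<in> perms k. perm_le ?\<sigma> \<rho> \<and> perm_le \<rho> ?\<tau>}"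
        have a1: "perm_Inv ?\<sigma> \<inter> nestedX Bs = A" "perm_Inv ?\<tau> \<inter> nestedX Bs = A"
          using WA_rep[OF A bot(1)] WA_rep[OF A top(1)] by auto
        have "perm_Inv \<rho> \<inter> nestedX Bs = A" using r a1 unfolding perm_le_def by blast
        then have "pw Bs \<rho> \<in> ?W" using pw_WA[OF A] r by blast
        moreover have "delrpt (pw Bs \<rho>) = \<rho>" using delrpt_pw r by blast
        ultimately show "\<rho> \<in> delrpt ` ?W" by (metis image_eqI)
      qed
    qed
  qed
  show ?thesis using comp bt lub glb Ps st bij iso by blast
qed

end

theorem mainTheorem7:
  fixes n :: nat
  shows "(\<forall>Bs A. ordered_partition n Bs \<and> A \<subseteq> nestedX Bs \<and> WA n Bs A \<noteq> {} \<longrightarrow>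
            (let W = WA n Bs A; k = length Bs in
              is_component n W \<and>
              (\<exists>bot\<in>W. \<exists>top\<in>W. \<forall>x\<in>W. pwo_le n bot x \<and> pwo_le n x top) \<and>
              (\<forall>u\<in>W. \<forall>w\<in>W. \<exists>j m. is_lub_on (pwo_le n) W u w j \<and> is_glb_on (pwo_le n) W u w m) \<and>
              (\<exists>\<sigma>\<in>perms k. \<exists>\<tau>\<in>perms k. perm_le \<sigma> \<tau> \<and>
                 bij_betw delrpt W {\<rho> \<in> perms k. perm_le \<sigma> \<rho> \<and> perm_le \<rho> \<tau>} \<and>
                 (\<forall>u\<in>W. \<forall>v\<in>W. pwo_le n u v \<longleftrightarrow> perm_le (delrpt u) (delrpt v))) \<and>
              (\<forall>u\<in>W. \<forall>w\<in>W.
                 is_lub_on (pwo_le n) W u w (pw Bs (perm_join (delrpt u) (delrpt w))) \<and>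
                 is_glb_on (pwo_le n) W u w (pw Bs (perm_meet (delrpt u) (delrpt w))))))
      \<and> (\<forall>W. is_component n W \<longrightarrow>
            (\<exists>Bs A. ordered_partition n Bs \<and> A \<subseteq> nestedX Bs \<and> W = WA n Bs A))"
proof (intro conjI allI impI)
  fix Bs A assume h: "ordered_partition n Bs \<and> A \<subseteq> nestedX Bs \<and> WA n Bs A \<noteq> {}"
  interpret opart n Bs using h by unfold_locales blast
  show "let W = WA n Bs A; k = length Bs in
              is_component n W \<and>
              (\<exists>bot\<in>W. \<exists>top\<in>W. \<forall>x\<in>W. pwo_le n bot x \<and> pwo_le n x top) \<and>
              (\<forall>u\<in>W. \<forall>w\<in>W. \<exists>j m. is_lub_on (pwo_le n) W u w j \<and> is_glb_on (pwo_le n) W u w m) \<and>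
              (\<exists>\<sigma>\<in>perms k. \<exists>\<tau>\<in>perms k. perm_le \<sigma> \<tau> \<and>
                 bij_betw delrpt W {\<rho> \<in> perms k. perm_le \<sigma> \<rho> \<and> perm_le \<rho> \<tau>} \<and>
                 (\<forall>u\<in>W. \<forall>v\<in>W. pwo_le n u v \<longleftrightarrow> perm_le (delrpt u) (delrpt v))) \<and>
              (\<forall>u\<in>W. \<forall>w\<in>W.
                 is_lub_on (pwo_le n) W u w (pw Bs (perm_join (delrpt u) (delrpt w))) \<and>
                 is_glb_on (pwo_le n) W u w (pw Bs (perm_meet (delrpt u) (delrpt w))))"
    unfolding Let_def using part1 h by blast
next
  fix W assume "is_component n W"
  then obtain u where u: "u \<in> PW n" "W = {v \<in> PW n. pconn n u v}" unfolding is_component_def by blast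
  obtain Bs where Bs: "ordered_partition n Bs" "set Bs = setpar u" using exists_op[OF u(1)] by blast
  interpret opart n Bs using Bs(1) by unfold_locales
  let ?A = "Inv u \<inter> nestedX Bs"
  have A: "?A \<subseteq> nestedX Bs" by simp
  have "u \<in> WA n Bs ?A" using WA_char[OF A] u(1) Bs(2) unfolding C_def by simp
  then have "W = WA n Bs ?A" using comp_W[OF A] u(2) by simp
  then show "\<exists>Bs A. ordered_partition n Bs \<and> A \<subseteq> nestedX Bs \<and> W = WA n Bs A" using Bs(1) A by blast
qed


end
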